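(* For any $k=0,1,2,\dots$, suppose (1) $K_2^{(k,0)} \in \mathcal{K}[A_{(k)},C_{1,(k)},\dots,C_{r,(k)}; B_2,D_{1,2},\dots, D_{r,2}]$; (2) there exist matrices $E_{l,(k)}$ ($0 \leq l \leq r$) such that $\sum_{l=0}^{r} E_{l,(k)}^\top E_{l,(k)} = M_{(k)}$ and the system $\left[E_{0,(k)}, E_{1,(k)}, \dotsb, E_{r,(k)}; A_{(k)}, C_{1,(k)}, \dotsb, C_{r,(k)}\right]$ is stochastically detectable. Then all the policies $\{K_2^{(k,j)}\}_{j=1}^\infty$ produced by the policy-improvement update are stabilizers of the system $[A_{(k)},C_{1,(k)},\dots,C_{r,(k)}; B_2,D_{1,2},\dots, D_{r,2}]$, i.e. $K_2^{(k,j)}\in \mathcal{K}[A_{(k)},C_{1,(k)},\dots,C_{r,(k)}; B_2,D_{1,2},\dots, D_{r,2}]$ for all $j=0,1,2,\dots$. Moreover, the solution $Z^{(k,j+1)} \in \overline{\mathbb{S}}_{+}^n$ of the policy-evaluation equation is unique.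
   Context: Fix $k$ and matrices $A_{(k)},C_{l,(k)}\in\mathbb{R}^{n\times n}$ ($1\le l\le r$), $B_2,D_{l,2}\in\mathbb{R}^{n\times m_2}$, $M_{(k)}\in\mathbb{S}^n$, and $R_{22,(k)}\in\mathbb{S}^{m_2}$, $R_{22,(k)}\succ0$ (in the setting $R_{22,(k)}=R_{22}+\sum_lD_{l,2}^\top P^{(k)}D_{l,2}$). A system $(\bar A,\bar C_1,\dots,\bar C_r)$, i.e. $dX=\bar AXdt+\sum_{l=1}^r\bar C_lXdw_l$ with $(w_1,\dots,w_r)$ a standard Brownian motion, is mean-square stable if $\mathbb{E}|X(t)|^2\to0$ for every initial state. $\mathcal{K}[\bar A,\bar C_1,\dots,\bar C_r;\bar B,\bar D_1,\dots,\bar D_r]$ denotes the set of all $\Theta$ such that $(\bar A+\bar B\Theta,\bar C_1+\bar D_1\Theta,\dots,\bar C_r+\bar D_r\Theta)$ is mean-square stable. The system $[E_0,\dots,E_r;\bar A,\bar C_1,\dots,\bar C_r]$ is stochastically detectable if there exists $\varTheta$ with $(\bar A+\varTheta E_0,\bar C_1+\varTheta E_1,\dots,\bar C_r+\varTheta E_r)$ mean-square stable. The inner policy iteration is: given $K_2^{(k,j)}$, policy evaluation finds $Z^{(k,j+1)}$ solving $Z(A_{(k)}+B_2K_2^{(k,j)})+(A_{(k)}+B_2K_2^{(k,j)})^\top Z+\sum_{l=1}^r(C_{l,(k)}+D_{l,2}K_2^{(k,j)})^\top Z(C_{l,(k)}+D_{l,2}K_2^{(k,j)})+M_{(k)}+K_2^{(k,j)\top}R_{22,(k)}K_2^{(k,j)}=0$;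 policy improvement sets $K_2^{(k,j+1)}=-(R_{22,(k)}+\sum_lD_{l,2}^\top Z^{(k,j+1)}D_{l,2})^{-1}(B_2^\top Z^{(k,j+1)}+\sum_lD_{l,2}^\top Z^{(k,j+1)}C_{l,(k)})$. *)

theory Defs
  imports "HOL-Analysis.Analysis"
begin

definition sym_mat :: "real^'n^'n \<Rightarrow> bool" where
  "sym_mat P \<longleftrightarrow> transpose P = P"

definition psd_mat :: "real^'n^'n \<Rightarrow> bool" where
  "psd_mat P \<longleftrightarrow> sym_mat P \<and> (\<forall>x. 0 \<le> x \<bullet> (P *v x))"

definition pd_mat :: "real^'n^'n \<Rightarrow> bool" where
  "pd_mat P \<longleftrightarrow> sym_mat P \<and> (\<forall>x. x \<noteq> 0 \<longrightarrow> 0 < x \<bullet> (P *v x))"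

text \<open>Second-moment generator of the linear SDE
  dX = A X dt + sum_{l=1}^r C_l X dw_l :  if S(t) = E[X(t) X(t)^T] then
  S' = A S + S A^T + sum_l C_l S C_l^T, and E|X(t)|^2 = trace S(t).\<close>
definition moment_op :: "real^'n^'n \<Rightarrow> (nat \<Rightarrow> real^'n^'n) \<Rightarrow> nat \<Rightarrow> real^'n^'n \<Rightarrow> real^'n^'n" where
  "moment_op A C r S = A ** S + S ** transpose A + (\<Sum>l=1..r. C l ** S ** transpose (C l))"

text \<open>Mean-square stability of (A, C_1, ..., C_r): for every initial state x0,
  E|X(t)|^2 = trace S(t) tends to 0, where S is the second moment matrix,
  S(0) = x0 x0^T.\<close>
definition ms_stable :: "real^'n^'n \<Rightarrow> (nat \<Rightarrow> real^'n^'n) \<Rightarrow> nat \<Rightarrow> bool" where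
  "ms_stable A C r \<longleftrightarrow>
     (\<forall>(x0::real^'n) (S::real \<Rightarrow> real^'n^'n).
        S 0 = (\<chi> i j. x0 $ i * x0 $ j) \<and>
        (\<forall>t\<ge>0. (S has_vector_derivative moment_op A C r (S t)) (at t within {0..}))
        \<longrightarrow> ((\<lambda>t. trace (S t)) \<longlongrightarrow> 0) at_top)"

definition stabilizers ::
  "real^'n^'n \<Rightarrow> (nat \<Rightarrow> real^'n^'n) \<Rightarrow> real^'m^'n \<Rightarrow> (nat \<Rightarrow> real^'m^'n) \<Rightarrow> nat \<Rightarrow> (real^'n^'m) set" where
  "stabilizers A C B D r = {\<Theta>. ms_stable (A + B ** \<Theta>) (\<lambda>l. C l + D l ** \<Theta>) r}"

definition stoch_detectable ::
  "(nat \<Rightarrow> real^'n^'p) \<Rightarrow> real^'n^'n \<Rightarrow> (nat \<Rightarrow> real^'n^'n) \<Rightarrow> nat \<Rightarrow> bool" where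
  "stoch_detectable E A C r \<longleftrightarrow>
     (\<exists>\<Theta>::real^'p^'n. ms_stable (A + \<Theta> ** E 0) (\<lambda>l. C l + \<Theta> ** E l) r)"

definition policy_eval_eq ::
  "real^'n^'n \<Rightarrow> (nat \<Rightarrow> real^'n^'n) \<Rightarrow> real^'m^'n \<Rightarrow> (nat \<Rightarrow> real^'m^'n) \<Rightarrow> nat
   \<Rightarrow> real^'n^'n \<Rightarrow> real^'m^'m \<Rightarrow> real^'n^'m \<Rightarrow> real^'n^'n \<Rightarrow> bool" where
  "policy_eval_eq A C B D r M R K Z \<longleftrightarrow>
     Z ** (A + B ** K) + transpose (A + B ** K) ** Z
     + (\<Sum>l=1..r. transpose (C l + D l ** K) ** Z ** (C l + D l ** K))
     + M + transpose K ** R ** K = 0"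

definition policy_improve ::
  "real^'n^'n \<Rightarrow> (nat \<Rightarrow> real^'n^'n) \<Rightarrow> real^'m^'n \<Rightarrow> (nat \<Rightarrow> real^'m^'n) \<Rightarrow> nat
   \<Rightarrow> real^'m^'m \<Rightarrow> real^'n^'n \<Rightarrow> real^'n^'m" where
  "policy_improve A C B D r R Z =
     - (matrix_inv (R + (\<Sum>l=1..r. transpose (D l) ** Z ** D l))
        ** (transpose B ** Z + (\<Sum>l=1..r. transpose (D l) ** Z ** C l)))"

end

theory Submission
  imports Defs
begin


typedef (overloaded) ('a::"{real_normed_vector,perfect_space}") endo = "UNIV :: ('a \<Rightarrow>\<^sub>L 'a) set"
  morphisms endo_of Endo by simp

setup_lifting type_definition_endo

instantiation endo :: ("{real_normed_vector,perfect_space}") real_normed_algebra_1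
begin
lift_definition norm_endo :: "'a endo \<Rightarrow> real" is norm .
lift_definition minus_endo :: "'a endo \<Rightarrow> 'a endo \<Rightarrow> 'a endo" is "(-)" .
lift_definition plus_endo :: "'a endo \<Rightarrow> 'a endo \<Rightarrow> 'a endo" is "(+)" .
lift_definition uminus_endo :: "'a endo \<Rightarrow> 'a endo" is uminus .
lift_definition zero_endo :: "'a endo" is 0 .
lift_definition one_endo :: "'a endo" is id_blinfun .
lift_definition times_endo :: "'a endo \<Rightarrow> 'a endo \<Rightarrow> 'a endo" is "(o\<^sub>L)" .
lift_definition scaleR_endo :: "real \<Rightarrow> 'a endo \<Rightarrow> 'a endo" is scaleR .
definition dist_endo :: "'a endo \<Rightarrow> 'a endo \<Rightarrow> real" where "dist_endo a b = norm (a - b)"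
definition uniformity_endo :: "('a endo \<times> 'a endo) filter" where
  "uniformity_endo = (INF e\<in>{0 <..}. principal {(x, y). dist x y < e})"
definition open_endo :: "'a endo set \<Rightarrow> bool"
  where "open_endo S = (\<forall>x\<in>S. \<forall>\<^sub>F (x', y) in uniformity. x' = x \<longrightarrow> y \<in> S)"
definition sgn_endo :: "'a endo \<Rightarrow> 'a endo" where "sgn_endo x = scaleR (inverse (norm x)) x"
instance
proof
  fix a b c :: "'a endo" and r s :: real
  show "a * b * c = a * (b * c)" by transfer (auto intro!: blinfun_eqI)
  show "1 * a = a" by transfer (auto intro!: blinfun_eqI)
  show "a * 1 = a" by transfer (auto intro!: blinfun_eqI)
  show "(a + b) * c = a * c + b * c" by transfer (auto intro!: blinfun_eqI simp: blinfun.bilinear_simps)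
  show "a * (b + c) = a * b + a * c" by transfer (auto intro!: blinfun_eqI simp: blinfun.bilinear_simps)
  show "(0::'a endo) \<noteq> 1"
  proof transfer
    have "UNIV \<noteq> {0::'a}" using not_open_singleton[of "0::'a"] open_UNIV by metis
    then obtain x :: 'a where "x \<noteq> 0" by auto
    show "0 \<noteq> (id_blinfun :: 'a \<Rightarrow>\<^sub>L 'a)" 
    proof
      assume "0 = (id_blinfun :: 'a \<Rightarrow>\<^sub>L 'a)"
      then have "blinfun_apply 0 x = blinfun_apply id_blinfun x" by simp
      then show False using \<open>x \<noteq> 0\<close> by simp
    qed
  qed
  show "scaleR r a * b = scaleR r (a * b)" by transfer (auto intro!: blinfun_eqI simp: blinfun.bilinear_simps)
  show "a * scaleR r b = scaleR r (a * b)" by transfer (auto intro!: blinfun_eqI simp: blinfun.bilinear_simps)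
  show "norm (a * b) \<le> norm a * norm b" by transfer (rule norm_blinfun_compose)
  show "norm (1::'a endo) = 1" by transfer simp
  show "a + b + c = a + (b + c)" by transfer simp
  show "a + b = b + a" by transfer simp
  show "0 + a = a" by transfer simp
  show "- a + a = 0" by transfer simp
  show "a - b = a + - b" by transfer simp
  show "r *\<^sub>R (a + b) = r *\<^sub>R a + r *\<^sub>R b" by transfer (simp add: scaleR_right_distrib)
  show "(r + s) *\<^sub>R a = r *\<^sub>R a + s *\<^sub>R a" by transfer (simp add: scaleR_left_distrib)
  show "r *\<^sub>R s *\<^sub>R a = (r * s) *\<^sub>R a" by transfer simp
  show "1 *\<^sub>R a = a" by transfer simp
  show "dist a b = norm (a - b)" by (simp add: dist_endo_def)
  show "sgn a = inverse (norm a) *\<^sub>R a" by (simp add: sgn_endo_def)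
  show "(uniformity :: ('a endo \<times> 'a endo) filter) = (INF e\<in>{0 <..}. principal {(x, y). dist x y < e})"
    by (simp add: uniformity_endo_def)
  fix U :: "'a endo set"
  show "open U = (\<forall>x\<in>U. \<forall>\<^sub>F (x', y) in uniformity. x' = x \<longrightarrow> y \<in> U)"
    by (simp add: open_endo_def)
  show "(norm a = 0) = (a = 0)" by transfer simp
  show "norm (a + b) \<le> norm a + norm b" by transfer (rule norm_triangle_ineq)
  show "norm (r *\<^sub>R a) = \<bar>r\<bar> * norm a" by transfer simp
qed
end

instance endo :: ("{real_normed_vector,perfect_space,banach}") banach
proof
  fix X :: "nat \<Rightarrow> 'a endo"
  assume "Cauchy X"
  have dist_eq: "dist (X m) (X n) = dist (endo_of (X m)) (endo_of (X n))" for m n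
    by (simp add: dist_norm norm_endo.rep_eq minus_endo.rep_eq)
  have "Cauchy (\<lambda>n. endo_of (X n))"
    using \<open>Cauchy X\<close> unfolding Cauchy_def dist_eq .
  then obtain l where l: "(\<lambda>n. endo_of (X n)) \<longlonglongrightarrow> l" using convergent_def Cauchy_convergent_iff by blast
  have "X \<longlonglongrightarrow> Endo l"
    using l unfolding tendsto_iff
    by (simp add: dist_norm norm_endo.rep_eq minus_endo.rep_eq Endo_inverse)
  then show "convergent X" by (auto simp: convergent_def)
qed

lemma linear_ode_exists:
  fixes f :: "'a::{real_normed_vector,perfect_space,banach} \<Rightarrow> 'a"
  assumes "bounded_linear f"
  shows "\<exists>S. S 0 = X \<and> (\<forall>t. (S has_vector_derivative f (S t)) (at t within T))"
proof -
  define L where "L = Endo (Blinfun f)"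
  have eL: "blinfun_apply (endo_of L) = f"
    unfolding L_def using assms by (simp add: Endo_inverse bounded_linear_Blinfun_apply)
  define S where "S t = blinfun_apply (endo_of (exp (t *\<^sub>R L))) X" for t
  have bl: "bounded_linear (\<lambda>E. blinfun_apply (endo_of E) X)"
    by (rule bounded_linear_intro[where K="norm X"])
      (auto simp: plus_endo.rep_eq scaleR_endo.rep_eq blinfun.bilinear_simps norm_endo.rep_eq
        intro: order_trans[OF norm_blinfun] simp: mult.commute)
  have "(S has_vector_derivative blinfun_apply (endo_of (L * exp (t *\<^sub>R L))) X) (at t within T)" for t
    unfolding S_def
    by (rule bounded_linear.has_vector_derivative[OF bl])
      (rule has_vector_derivative_at_within[OF exp_scaleR_has_vector_derivative_left])
  moreover have "blinfun_apply (endo_of (L * exp (t *\<^sub>R L))) X = f (S t)" for t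
    by (simp add: S_def times_endo.rep_eq eL)
  moreover have "S 0 = X" by (simp add: S_def one_endo.rep_eq)
  ultimately show ?thesis by metis
qed


definition outer :: "real^'n \<Rightarrow> real^'m \<Rightarrow> real^'m^'n" where
  "outer x y = (\<chi> i j. x $ i * y $ j)"

definition Lstar :: "real^'n^'n \<Rightarrow> (nat \<Rightarrow> real^'n^'n) \<Rightarrow> nat \<Rightarrow> real^'n^'n \<Rightarrow> real^'n^'n" where
  "Lstar A C r Z = Z ** A + transpose A ** Z + (\<Sum>l=1..r. transpose (C l) ** Z ** C l)"

definition qnn :: "real^'n^'n \<Rightarrow> bool" where
  "qnn S \<longleftrightarrow> (\<forall>x. 0 \<le> x \<bullet> (S *v x))"

definition is_sol :: "real^'n^'n \<Rightarrow> (nat \<Rightarrow> real^'n^'n) \<Rightarrow> nat \<Rightarrow> (real \<Rightarrow> real^'n^'n) \<Rightarrow> bool" where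
  "is_sol A C r S \<longleftrightarrow> (\<forall>t\<ge>0. (S has_vector_derivative moment_op A C r (S t)) (at t within {0..}))"


lemma sum3_swap: "(\<Sum>i\<in>I. \<Sum>j\<in>J. \<Sum>k\<in>K. f i j k) = (\<Sum>k\<in>K. \<Sum>j\<in>J. \<Sum>i\<in>I. f i j k)"
proof -
  have "(\<Sum>i\<in>I. \<Sum>j\<in>J. \<Sum>k\<in>K. f i j k) = (\<Sum>i\<in>I. \<Sum>k\<in>K. \<Sum>j\<in>J. f i j k)"
    by (rule sum.cong[OF refl], rule sum.swap)
  also have "\<dots> = (\<Sum>k\<in>K. \<Sum>i\<in>I. \<Sum>j\<in>J. f i j k)" by (rule sum.swap)
  also have "\<dots> = (\<Sum>k\<in>K. \<Sum>j\<in>J. \<Sum>i\<in>I. f i j k)"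
    by (rule sum.cong[OF refl], rule sum.swap)
  finally show ?thesis .
qed

lemma mm_add_rdistrib: "((A::'a::semiring_1^'n^'m) + B) ** C = A ** C + B ** C"
  by (simp add: matrix_matrix_mult_def vec_eq_iff sum.distrib distrib_right)

lemma mm_diff_rdistrib: "((A::'a::ring_1^'n^'m) - B) ** C = A ** C - B ** C"
  by (simp add: matrix_matrix_mult_def vec_eq_iff sum_subtractf left_diff_distrib)

lemma mm_diff_ldistrib: "(C::'a::ring_1^'n^'m) ** (A - B) = C ** A - C ** B"
  by (simp add: matrix_matrix_mult_def vec_eq_iff sum_subtractf right_diff_distrib)

lemma mm_scaleR_left: "((c::real) *\<^sub>R (A::real^'n^'m)) ** B = c *\<^sub>R (A ** B)"
  by (simp add: matrix_matrix_mult_def vec_eq_iff sum_distrib_left mult_ac)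

lemma mm_scaleR_right: "(A::real^'n^'m) ** ((c::real) *\<^sub>R B) = c *\<^sub>R (A ** B)"
  by (simp add: matrix_matrix_mult_def vec_eq_iff sum_distrib_left mult_ac)

lemma mm_sum_left: "(sum (f::'i \<Rightarrow> 'a::semiring_1^'n^'m) I) ** B = (\<Sum>i\<in>I. f i ** B)"
  by (induction I rule: infinite_finite_induct) (auto simp: mm_add_rdistrib)

lemma mm_sum_right: "(B::'a::semiring_1^'n^'m) ** (sum f I) = (\<Sum>i\<in>I. B ** f i)"
  by (induction I rule: infinite_finite_induct) (auto simp: matrix_add_ldistrib)

lemma mm_uminus_left: "(- (A::'a::ring_1^'n^'m)) ** B = - (A ** B)"
  by (simp add: matrix_matrix_mult_def vec_eq_iff sum_negf)

lemma mm_uminus_right: "(A::'a::ring_1^'n^'m) ** (- B) = - (A ** B)"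
  by (simp add: matrix_matrix_mult_def vec_eq_iff sum_negf)

lemma inner_mat_eq: "(X::real^'n^'m) \<bullet> Y = (\<Sum>i\<in>UNIV. \<Sum>j\<in>UNIV. X$i$j * Y$i$j)"
  by (simp add: inner_vec_def)

lemma inner_outer: "(X::real^'m^'n) \<bullet> outer a b = a \<bullet> (X *v b)"
  by (simp add: inner_mat_eq outer_def inner_vec_def matrix_vector_mult_def sum_distrib_left
      mult_ac)

lemma inner_mm_left: "((A::real^'k^'n) ** (S::real^'m^'k)) \<bullet> Z = S \<bullet> (transpose A ** Z)"
proof -
  have "((A ** S) \<bullet> Z) = (\<Sum>i\<in>UNIV. \<Sum>j\<in>UNIV. \<Sum>k\<in>UNIV. A$i$k * S$k$j * Z$i$j)"
    by (simp add: inner_mat_eq matrix_matrix_mult_def sum_distrib_right)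
  also have "\<dots> = (\<Sum>k\<in>UNIV. \<Sum>j\<in>UNIV. \<Sum>i\<in>UNIV. A$i$k * S$k$j * Z$i$j)"
    by (rule sum3_swap)
  also have "\<dots> = S \<bullet> (transpose A ** Z)"
    by (simp add: inner_mat_eq matrix_matrix_mult_def transpose_def sum_distrib_left mult_ac)
  finally show ?thesis .
qed

lemma inner_mm_right: "((S::real^'k^'n) ** (B::real^'m^'k)) \<bullet> Z = S \<bullet> (Z ** transpose B)"
proof -
  have "((S ** B) \<bullet> Z) = (\<Sum>i\<in>UNIV. \<Sum>j\<in>UNIV. \<Sum>k\<in>UNIV. S$i$k * B$k$j * Z$i$j)"
    by (simp add: inner_mat_eq matrix_matrix_mult_def sum_distrib_right)
  also have "\<dots> = (\<Sum>i\<in>UNIV. \<Sum>k\<in>UNIV. \<Sum>j\<in>UNIV. S$i$k * B$k$j * Z$i$j)"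
    apply (rule sum.cong, rule refl)
    apply (subst sum.swap)
    apply (rule refl)
    done
  also have "\<dots> = S \<bullet> (Z ** transpose B)"
    by (simp add: inner_mat_eq matrix_matrix_mult_def transpose_def sum_distrib_left mult_ac)
  finally show ?thesis .
qed

lemma inner_sym: "(X::real^'n^'m) \<bullet> Y = transpose X \<bullet> transpose Y"
  by (simp add: inner_mat_eq transpose_def) (rule sum.swap)

lemma matvec_inner_transpose: "((A::real^'n^'m) *v x) \<bullet> y = x \<bullet> (transpose A *v y)"
  by (metis dot_lmul_matrix inner_commute transpose_matrix_vector)

lemma moment_op_dual: "moment_op A C r S \<bullet> Z = S \<bullet> Lstar A C r Z"
proof -
  have t3: "(C l ** S ** transpose (C l)) \<bullet> Z = S \<bullet> (transpose (C l) ** Z ** C l)" for l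
  proof -
    have "(C l ** S ** transpose (C l)) \<bullet> Z = (C l ** S) \<bullet> (Z ** C l)"
      using inner_mm_right[of "C l ** S" "transpose (C l)" Z] by simp
    also have "\<dots> = S \<bullet> (transpose (C l) ** (Z ** C l))" by (rule inner_mm_left)
    finally show ?thesis by (simp add: matrix_mul_assoc)
  qed
  show ?thesis
    unfolding moment_op_def Lstar_def
    using inner_mm_left[of A S Z] inner_mm_right[of S "transpose A" Z]
    by (simp only: inner_add_left inner_add_right inner_sum_left inner_sum_right t3
        transpose_transpose add_ac)
qed

lemma transpose_add: "transpose ((X::'a::semiring_1^'n^'m) + Y) = transpose X + transpose Y"
  by (simp add: transpose_def vec_eq_iff)

lemma transpose_sum: "transpose (sum (f::'i \<Rightarrow> 'a::semiring_1^'n^'m) I) = (\<Sum>i\<in>I. transpose (f i))"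
  by (induction I rule: infinite_finite_induct) (auto simp: transpose_add transpose_def vec_eq_iff)

lemma transpose_mul: "transpose ((A::'a::comm_semiring_1^'n^'m) ** B) = transpose B ** transpose A"
  by (rule matrix_transpose_mul)

lemma moment_op_transpose: "transpose (moment_op A C r S) = moment_op A C r (transpose S)"
  unfolding moment_op_def
  by (simp add: transpose_add transpose_sum transpose_mul matrix_mul_assoc add_ac)

lemma Lstar_transpose: "transpose (Lstar A C r S) = Lstar A C r (transpose S)"
  unfolding Lstar_def
  by (simp add: transpose_add transpose_sum transpose_mul matrix_mul_assoc add_ac)

lemma linear_moment_op: "linear (moment_op A C r)"
  unfolding moment_op_def
  by (rule linearI)
    (simp_all add: matrix_add_ldistrib mm_add_rdistrib sum.distrib mm_scaleR_left
       mm_scaleR_right scaleR_sum_right algebra_simps)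


lemma mv_sum_left: "(sum (f::'i \<Rightarrow> real^'n^'m) I) *v x = (\<Sum>i\<in>I. f i *v x)"
  by (induction I rule: infinite_finite_induct) (auto simp: matrix_vector_mult_add_rdistrib)

lemma outer_mv: "outer a b *v x = (b \<bullet> x) *\<^sub>R a"
  by (simp add: outer_def matrix_vector_mult_def vec_eq_iff inner_vec_def sum_distrib_left mult_ac)

lemma outer_qf: "x \<bullet> (outer a b *v y) = (a \<bullet> x) * (b \<bullet> y)"
  by (simp add: outer_mv inner_commute)

lemma transpose_outer: "transpose (outer a b) = outer b a"
  by (simp add: outer_def transpose_def vec_eq_iff)

lemma qf_expand:
  fixes Y :: "real^'n^'n"
  assumes "transpose Y = Y"
  shows "(x + s *\<^sub>R y) \<bullet> (Y *v (x + s *\<^sub>R y)) = x \<bullet> (Y *v x) + 2 * s * (x \<bullet> (Y *v y)) + s^2 * (y \<bullet> (Y *v y))"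
proof -
  have "y \<bullet> (Y *v x) = x \<bullet> (Y *v y)"
    using matvec_inner_transpose[of Y y x] assms by (simp add: inner_commute)
  then show ?thesis
    by (simp add: matrix_vector_right_distrib inner_add_left inner_add_right
        matrix_vector_mult_scaleR power2_eq_square algebra_simps)
qed

lemma quad_nonneg_coeff:
  fixes a b c :: real
  assumes "\<And>s. 0 \<le> a + 2 * s * b + s^2 * c" and c0: "0 \<le> c"
  shows "b^2 \<le> a * c"
proof (cases "c = 0")
  case True
  have "b = 0"
  proof (rule ccontr)
    assume "b \<noteq> 0"
    have "0 \<le> a + 2 * (-(\<bar>a\<bar> + 1) / b) * b" using assms(1)[of "-(\<bar>a\<bar> + 1) / b"] True by simp
    also have "\<dots> = a - 2 * (\<bar>a\<bar> + 1)" using \<open>b \<noteq> 0\<close> by (simp add: field_simps)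
    finally show False by (smt (verit) abs_ge_self abs_ge_minus_self)
  qed
  then show ?thesis using True by simp
next
  case False
  then have "c > 0" using False c0 by simp
  have "0 \<le> a + 2 * (-b/c) * b + (-b/c)^2 * c" by (rule assms(1))
  also have "\<dots> = a - b^2 / c" using \<open>c > 0\<close> by (simp add: field_simps power2_eq_square)
  finally show ?thesis using \<open>c > 0\<close> by (simp add: field_simps)
qed

lemma psd_cauchy_schwarz:
  fixes Y :: "real^'n^'n"
  assumes "transpose Y = Y" "qnn Y"
  shows "(x \<bullet> (Y *v y))^2 \<le> (x \<bullet> (Y *v x)) * (y \<bullet> (Y *v y))"
  by (rule quad_nonneg_coeff) (metis assms qnn_def qf_expand)+

lemma psd_zero_imp_null:
  fixes Y :: "real^'n^'n"
  assumes "transpose Y = Y" "qnn Y" "x \<bullet> (Y *v x) = 0"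
  shows "Y *v x = 0"
proof -
  have "((Y *v x) \<bullet> (Y *v x))^2 \<le> ((Y *v x) \<bullet> (Y *v (Y *v x))) * (x \<bullet> (Y *v x))"
    by (rule psd_cauchy_schwarz[OF assms(1,2)])
  then have "((Y *v x) \<bullet> (Y *v x))^2 \<le> 0" using assms(3) by simp
  then show ?thesis by simp
qed

lemma gram_aux:
  fixes I :: "'n::finite set"
  shows "\<forall>Y::real^'n^'n. transpose Y = Y \<and> qnn Y \<and> (\<forall>i j. (i \<notin> I \<or> j \<notin> I) \<longrightarrow> Y$i$j = 0)
     \<longrightarrow> (\<exists>g. Y = (\<Sum>k\<in>I. outer (g k) (g k)))"
proof (induction I rule: finite_induct[OF finite])
  case 1
  then show ?case by (auto simp: vec_eq_iff)
next
  case (2 i I)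
  show ?case
  proof (intro allI impI, elim conjE)
    fix Y :: "real^'n^'n"
    assume sym: "transpose Y = Y" and nn: "qnn Y" and z: "\<forall>a b. a \<notin> insert i I \<or> b \<notin> insert i I \<longrightarrow> Y$a$b = 0"
    have symE: "Y$a$b = Y$b$a" for a b using sym by (metis transpose_def vec_lambda_beta)
    define e where "e = (axis i 1 :: real^'n)"
    have Ye: "(Y *v e)$a = Y$a$i" for a
      by (simp add: e_def matrix_vector_mult_def axis_def if_distrib cong: if_cong)
    have ew: "e \<bullet> w = w$i" for w :: "real^'n"
      by (simp add: e_def inner_axis')
    have eYe: "e \<bullet> (Y *v e) = Y$i$i" by (simp add: ew Ye)
    define d where "d = Y$i$i"
    have d0: "d \<ge> 0" using nn eYe unfolding qnn_def d_def by metis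
    show "\<exists>g. Y = (\<Sum>k\<in>insert i I. outer (g k) (g k))"
    proof (cases "d = 0")
      case True
      have "Y *v e = 0" using psd_zero_imp_null[OF sym nn] eYe True d_def by simp
      then have col: "Y$a$i = 0" for a using Ye by (metis zero_index)
      have "\<forall>a b. a \<notin> I \<or> b \<notin> I \<longrightarrow> Y$a$b = 0"
        using z col symE by (metis insert_iff)
      then obtain g where g: "Y = (\<Sum>k\<in>I. outer (g k) (g k))" using "2.IH" sym nn by blast
      have "(\<Sum>k\<in>I. outer ((g(i:=0)) k) ((g(i:=0)) k)) = (\<Sum>k\<in>I. outer (g k) (g k))"
        by (rule sum.cong) (use "2.hyps" in auto)
      then show ?thesis
        by (intro exI[of _ "g(i := 0)"]) (simp add: "2.hyps" g outer_def vec_eq_iff)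
    next
      case False
      then have dp: "d > 0" using d0 by simp
      define v where "v = (\<chi> a. Y$a$i / sqrt d)"
      define Y' where "Y' = Y - outer v v"
      have Y'e: "Y'$a$b = Y$a$b - Y$a$i * Y$b$i / d" for a b
        using dp by (simp add: Y'_def outer_def v_def real_sqrt_mult[symmetric])
      have sym': "transpose Y' = Y'"
        by (simp add: Y'_def transpose_def vec_eq_iff outer_def symE)
      have xv: "x \<bullet> v = (x \<bullet> (Y *v e)) / sqrt d" for x
        by (simp add: inner_vec_def v_def Ye sum_divide_distrib)
      have nn': "qnn Y'"
        unfolding qnn_def
      proof
        fix x
        have "x \<bullet> (Y' *v x) = x \<bullet> (Y *v x) - (x \<bullet> v)^2"
          by (simp add: Y'_def matrix_vector_mult_diff_rdistrib inner_diff_right outer_qf power2_eq_square inner_commute)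
        also have "\<dots> = x \<bullet> (Y *v x) - (x \<bullet> (Y *v e))^2 / d"
          using dp by (simp add: xv power_divide)
        finally have eq: "x \<bullet> (Y' *v x) = x \<bullet> (Y *v x) - (x \<bullet> (Y *v e))^2 / d" .
        have "(x \<bullet> (Y *v e))^2 \<le> (x \<bullet> (Y *v x)) * d"
          using psd_cauchy_schwarz[OF sym nn, of x e] eYe d_def by simp
        then have "(x \<bullet> (Y *v e))^2 / d \<le> x \<bullet> (Y *v x)" using dp by (simp add: field_simps)
        then show "0 \<le> x \<bullet> (Y' *v x)" using eq by simp
      qed
      have z': "\<forall>a b. a \<notin> I \<or> b \<notin> I \<longrightarrow> Y'$a$b = 0"
      proof (intro allI impI)
        fix a b assume ab: "a \<notin> I \<or> b \<notin> I"
        show "Y'$a$b = 0"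
        proof (cases "a = i \<or> b = i")
          case True
          then show ?thesis using dp by (auto simp: Y'e d_def symE)
        next
          case False
          then have "a \<notin> insert i I \<or> b \<notin> insert i I" using ab by auto
          then have "Y$a$b = 0 \<and> (Y$a$i = 0 \<or> Y$b$i = 0)" using z by (metis insert_iff)
          then show ?thesis by (auto simp: Y'e)
        qed
      qed
      obtain g where g: "Y' = (\<Sum>k\<in>I. outer (g k) (g k))" using "2.IH" sym' nn' z' by blast
      have "Y = outer v v + Y'" by (simp add: Y'_def)
      moreover have "(\<Sum>k\<in>I. outer ((g(i:=v)) k) ((g(i:=v)) k)) = (\<Sum>k\<in>I. outer (g k) (g k))"
        by (rule sum.cong) (use "2.hyps" in auto)
      ultimately show ?thesis
        by (intro exI[of _ "g(i := v)"]) (simp add: "2.hyps" g)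
    qed
  qed
qed

lemma gram:
  fixes Y :: "real^'n^'n"
  assumes "transpose Y = Y" "qnn Y"
  shows "\<exists>g::'n \<Rightarrow> real^'n. Y = (\<Sum>k\<in>UNIV. outer (g k) (g k))"
  using gram_aux[of UNIV, rule_format, of Y] assms by simp

lemma gram_inner:
  "(\<Sum>k\<in>UNIV. outer (g k) (g k)) \<bullet> Z = (\<Sum>k\<in>UNIV. g k \<bullet> (Z *v g k))"
  by (simp add: inner_sum_left inner_commute[of "outer _ _"] inner_outer)

lemma trace_inner_I: "trace (S::real^'n^'n) = S \<bullet> mat 1"
  by (simp add: trace_def inner_mat_eq mat_def if_distrib sum.delta cong: if_cong)

lemma gram_trace:
  "trace (\<Sum>k\<in>UNIV. outer (g k) (g k)) = (\<Sum>k\<in>UNIV. g k \<bullet> g k)"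
  by (simp add: trace_inner_I gram_inner)


lemma bounded_linear_moment_op: "bounded_linear (moment_op A C r)"
  using linear_moment_op linear_conv_bounded_linear by blast

lemma linear_transpose: "linear (transpose :: real^'n^'m \<Rightarrow> real^'m^'n)"
  by (rule linearI) (simp_all add: transpose_add transpose_scalar)

lemma bounded_linear_transpose: "bounded_linear (transpose :: real^'n^'m \<Rightarrow> real^'m^'n)"
  using linear_transpose linear_conv_bounded_linear by blast

lemma sol_exists: "\<exists>S. S 0 = X \<and> is_sol A C r S"
  using linear_ode_exists[OF bounded_linear_moment_op, of X A C r "{0..}"]
  unfolding is_sol_def by blast

lemma sol_transpose: "is_sol A C r S \<Longrightarrow> is_sol A C r (\<lambda>t. transpose (S t))"
  unfolding is_sol_def
  using bounded_linear.has_vector_derivative[OF bounded_linear_transpose]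
  by (metis moment_op_transpose)

lemma sol_add: "is_sol A C r S \<Longrightarrow> is_sol A C r T \<Longrightarrow> is_sol A C r (\<lambda>t. S t + T t)"
  unfolding is_sol_def
  by (simp add: has_vector_derivative_add linear_add[OF linear_moment_op])

lemma sol_scale: "is_sol A C r S \<Longrightarrow> is_sol A C r (\<lambda>t. c *\<^sub>R S t)"
  unfolding is_sol_def
  using bounded_linear.has_vector_derivative[OF bounded_linear_scaleR_right, of S _ _ c]
  by (simp add: linear_scale[OF linear_moment_op])

lemma sol_diff: "is_sol A C r S \<Longrightarrow> is_sol A C r T \<Longrightarrow> is_sol A C r (\<lambda>t. S t - T t)"
  using sol_add[of A C r S "\<lambda>t. (-1) *\<^sub>R T t"] sol_scale[of A C r T "-1"] by simp

lemma sol_zero: "is_sol A C r (\<lambda>t. 0)"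
  unfolding is_sol_def by (simp add: linear_0[OF linear_moment_op])

lemma sol_sym: "is_sol A C r S \<Longrightarrow> is_sol A C r (\<lambda>t. (1/2) *\<^sub>R (S t + transpose (S t)))"
  by (intro sol_scale sol_add sol_transpose)

lemma sol_inner_deriv:
  assumes "is_sol A C r S" "t \<ge> 0"
  shows "((\<lambda>t. S t \<bullet> Y) has_real_derivative (S t \<bullet> Lstar A C r Y)) (at t within {0..})"
proof -
  have "(S has_vector_derivative moment_op A C r (S t)) (at t within {0..})"
    using assms unfolding is_sol_def by auto
  from bounded_linear.has_vector_derivative[OF bounded_linear_inner_left this]
  show ?thesis
    by (simp add: has_real_derivative_iff_has_vector_derivative moment_op_dual)
qed

lemma sol_continuous_on:
  assumes "is_sol A C r S"
  shows "continuous_on {0..} S"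
  using assms unfolding is_sol_def
  by (auto simp: continuous_on_eq_continuous_within intro: has_vector_derivative_continuous)

lemma nonincreasing_from_deriv:
  fixes f f' :: "real \<Rightarrow> real"
  assumes "\<And>t. t \<ge> 0 \<Longrightarrow> (f has_real_derivative f' t) (at t within {0..})"
    and "\<And>t. t \<ge> 0 \<Longrightarrow> f' t \<le> 0"
    and "0 \<le> s" "s \<le> t"
  shows "f t \<le> f s"
proof -
  have "\<exists>x\<in>{s..t}. f t - f s = (\<lambda>h. h * f' x) (t - s)"
  proof (rule mvt_very_simple[OF assms(4)])
    fix x assume "s \<le> x" "x \<le> t"
    then have "(f has_real_derivative f' x) (at x within {s..t})"
      using assms(1)[of x] assms(3) by (auto intro: has_field_derivative_subset)
    then show "(f has_derivative (\<lambda>h. h * f' x)) (at x within {s..t})"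
      by (simp add: has_field_derivative_def mult.commute[of _ "f' x"])
  qed
  then obtain x where "x \<in> {s..t}" "f t - f s = (t - s) * f' x" by auto
  moreover have "f' x \<le> 0" using assms(2,3) \<open>x \<in> {s..t}\<close> by auto
  ultimately show ?thesis using assms(4) by (smt (verit) mult_nonneg_nonpos)
qed

lemma exp_decay_from_deriv:
  fixes f f' :: "real \<Rightarrow> real"
  assumes "\<And>t. t \<ge> 0 \<Longrightarrow> (f has_real_derivative f' t) (at t within {0..})"
    and "\<And>t. t \<ge> 0 \<Longrightarrow> f' t \<le> - k * f t"
    and "0 \<le> t"
  shows "f t \<le> f 0 * exp (- k * t)"
proof -
  define g where "g t = exp (k * t) * f t" for t
  have "g t \<le> g 0"
  proof (rule nonincreasing_from_deriv[of g "\<lambda>t. exp (k*t) * (k * f t + f' t)"])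
    fix t :: real assume "t \<ge> 0"
    have "((\<lambda>t. exp (k * t)) has_real_derivative exp (k*t) * k) (at t within {0..})"
      by (auto intro!: derivative_eq_intros)
    from DERIV_mult[OF this assms(1)[OF \<open>t\<ge>0\<close>]]
    show "(g has_real_derivative exp (k*t) * (k * f t + f' t)) (at t within {0..})"
      unfolding g_def by (simp add: algebra_simps)
    show "exp (k*t) * (k * f t + f' t) \<le> 0"
      using assms(2)[OF \<open>t\<ge>0\<close>] by (intro mult_nonneg_nonpos) auto
  qed (use assms in auto)
  then have "exp (k*t) * f t \<le> f 0" by (simp add: g_def)
  then have "exp (-k*t) * (exp (k*t) * f t) \<le> exp (-k*t) * f 0" by (simp add: mult_left_mono)
  then show ?thesis by (simp add: exp_minus mult.commute field_simps)
qed


declare transpose_matrix_vector[simp del]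

lemma mv_scaleR_left: "((c::real) *\<^sub>R (X::real^'n^'m)) *v a = c *\<^sub>R (X *v a)"
  by (simp add: matrix_vector_mult_def vec_eq_iff sum_distrib_left mult_ac)

lemma norm_mv_le: "norm ((M::real^'n^'m) *v x) \<le> norm M * norm x"
proof -
  have comp: "(M *v x)$i = M$i \<bullet> x" for i
    by (simp add: matrix_vector_mult_def inner_vec_def)
  have "norm (M *v x)^2 = (\<Sum>i\<in>UNIV. (M$i \<bullet> x)^2)"
    unfolding power2_norm_eq_inner by (simp add: inner_vec_def[of "M *v x"] comp power2_eq_square)
  also have "\<dots> \<le> (\<Sum>i\<in>UNIV. norm (M$i)^2 * norm x^2)"
    by (intro sum_mono) (metis Cauchy_Schwarz_ineq2 abs_ge_zero power_mono power_mult_distrib power2_abs)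
  also have "\<dots> = norm M^2 * norm x^2"
    by (simp add: power2_norm_eq_inner[of M] inner_vec_def sum_distrib_right power2_norm_eq_inner)
  also have "\<dots> = (norm M * norm x)^2" by (simp add: power_mult_distrib)
  finally show ?thesis by (rule power2_le_imp_le) simp
qed

lemma qf_bound: "\<bar>x \<bullet> ((M::real^'n^'n) *v x)\<bar> \<le> norm M * (x \<bullet> x)"
proof -
  have "\<bar>x \<bullet> (M *v x)\<bar> \<le> norm x * norm (M *v x)" by (rule Cauchy_Schwarz_ineq2)
  also have "\<dots> \<le> norm x * (norm M * norm x)" by (intro mult_left_mono norm_mv_le) simp
  finally show ?thesis by (simp add: power2_norm_eq_inner[symmetric] power2_eq_square mult_ac)
qed

definition qf2 :: "real^'n^'n \<Rightarrow> real^'n^'n \<Rightarrow> real^'n \<Rightarrow> real^'n \<Rightarrow> real" where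
  "qf2 X W a b = a \<bullet> (X *v a) + b \<bullet> (X *v b) + a \<bullet> (W *v b) - b \<bullet> (W *v a)"

definition pol :: "real^'n^'n \<Rightarrow> real^'n^'n \<Rightarrow> real^'n \<Rightarrow> real^'n \<Rightarrow> real^'n \<Rightarrow> real^'n \<Rightarrow> real" where
  "pol Y V a b a' b' = a \<bullet> (Y *v a') + a' \<bullet> (Y *v a) + b \<bullet> (Y *v b') + b' \<bullet> (Y *v b)
     + a \<bullet> (V *v b') + a' \<bullet> (V *v b) - b \<bullet> (V *v a') - b' \<bullet> (V *v a)"

lemma qf2_inner: "qf2 X W a b = X \<bullet> (outer a a + outer b b) + W \<bullet> (outer a b - outer b a)"
  by (simp add: qf2_def inner_add_right inner_diff_right inner_outer)

lemma qf2_lin: "qf2 (X1 + c *\<^sub>R X2) (W1 + d *\<^sub>R W2) a b = qf2 X1 W1 a b + c * qf2 X2 0 a b + d * qf2 0 W2 a b"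
  by (simp add: qf2_def matrix_vector_mult_add_rdistrib inner_add_right mv_scaleR_left algebra_simps)

lemma qf2_add: "qf2 (X1 + X2) (W1 + W2) a b = qf2 X1 W1 a b + qf2 X2 W2 a b"
  by (simp add: qf2_def matrix_vector_mult_add_rdistrib inner_add_right algebra_simps)

lemma qf2_zero: "qf2 0 0 a b = 0" by (simp add: qf2_def)

lemma qf2_sum: "qf2 (sum f I) (sum g I) a b = (\<Sum>l\<in>I. qf2 (f l) (g l) a b)"
  by (induction I rule: infinite_finite_induct) (auto simp: qf2_add qf2_zero)

lemma qf2_scale_vec: "qf2 X W (c *\<^sub>R a) (c *\<^sub>R b) = c^2 * qf2 X W a b"
  by (simp add: qf2_def matrix_vector_mult_scaleR power2_eq_square algebra_simps)

lemma qf2_I: "qf2 (mat 1) 0 a b = a \<bullet> a + b \<bullet> b"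
  by (simp add: qf2_def)

lemma qf2_00: "qf2 X W 0 0 = 0" by (simp add: qf2_def)

lemma qf2_expand:
  "qf2 Y V (a + s *\<^sub>R a') (b + s *\<^sub>R b') = qf2 Y V a b + s * pol Y V a b a' b' + s^2 * qf2 Y V a' b'"
  by (simp add: qf2_def pol_def matrix_vector_right_distrib inner_add_left inner_add_right
      matrix_vector_mult_scaleR power2_eq_square algebra_simps)

lemma inner_mv_mm: "a \<bullet> (((A::real^'n^'n) ** Y) *v b) = (transpose A *v a) \<bullet> (Y *v b)"
  unfolding matrix_vector_mul_assoc[symmetric]
  by (metis matvec_inner_transpose transpose_transpose)

lemma inner_mv_mmT: "a \<bullet> (((Y::real^'n^'n) ** transpose A) *v b) = a \<bullet> (Y *v (transpose A *v b))"
  by (simp add: matrix_vector_mul_assoc[symmetric])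

lemma qf2_drift:
  "qf2 (A ** Y + Y ** transpose A) (A ** V + V ** transpose A) a b
     = pol Y V a b (transpose A *v a) (transpose A *v b)"
  by (simp add: qf2_def pol_def matrix_vector_mult_add_rdistrib inner_add_right inner_mv_mm[of _ A] inner_mv_mmT
      algebra_simps)

lemma qf2_noise:
  "qf2 ((C::real^'n^'n) ** Y ** transpose C) (C ** V ** transpose C) a b
     = qf2 Y V (transpose C *v a) (transpose C *v b)"
proof -
  have e: "x \<bullet> ((C ** Z ** transpose C) *v y) = (transpose C *v x) \<bullet> (Z *v (transpose C *v y))" for x y Z
    using inner_mv_mm[of x C "Z ** transpose C" y] inner_mv_mmT[of "transpose C *v x" Z C y]
    by (simp add: matrix_mul_assoc)
  show ?thesis by (simp add: qf2_def e)
qed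

lemma qf2_moment:
  "qf2 (moment_op A C r Y) (moment_op A C r V) a b
     = pol Y V a b (transpose A *v a) (transpose A *v b)
       + (\<Sum>l=1..r. qf2 Y V (transpose (C l) *v a) (transpose (C l) *v b))"
proof -
  have "qf2 (moment_op A C r Y) (moment_op A C r V) a b
     = qf2 (A ** Y + Y ** transpose A) (A ** V + V ** transpose A) a b
       + qf2 (\<Sum>l=1..r. C l ** Y ** transpose (C l)) (\<Sum>l=1..r. C l ** V ** transpose (C l)) a b"
    unfolding moment_op_def by (rule qf2_add)
  then show ?thesis by (simp add: qf2_drift qf2_sum qf2_noise)
qed

lemma cross_pos:
  assumes nn: "\<And>a b. 0 \<le> qf2 Y V a b" and z: "qf2 Y V a b = 0"
  shows "0 \<le> qf2 (moment_op A C r Y) (moment_op A C r V) a b"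
proof -
  let ?a' = "transpose A *v a" and ?b' = "transpose A *v b"
  have "(pol Y V a b ?a' ?b' / 2)^2 \<le> qf2 Y V a b * qf2 Y V ?a' ?b'"
  proof (rule quad_nonneg_coeff)
    fix s :: real
    show "0 \<le> qf2 Y V a b + 2 * s * (pol Y V a b ?a' ?b' / 2) + s\<^sup>2 * qf2 Y V ?a' ?b'"
      using nn[of "a + s *\<^sub>R ?a'" "b + s *\<^sub>R ?b'"] by (simp add: qf2_expand)
  qed (rule nn)
  then have "pol Y V a b ?a' ?b' = 0" using z by simp
  moreover have "0 \<le> (\<Sum>l=1..r. qf2 Y V (transpose (C l) *v a) (transpose (C l) *v b))"
    by (intro sum_nonneg nn)
  ultimately show ?thesis by (simp add: qf2_moment)
qed

lemma continuous_on_outer[continuous_intros]: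
  "continuous_on S f \<Longrightarrow> continuous_on S g \<Longrightarrow> continuous_on S (\<lambda>x. outer (f x) (g x))"
  unfolding outer_def by (intro continuous_intros)

lemma norm_pair_sq: "norm (a, b) = 1 \<Longrightarrow> a \<bullet> a + b \<bullet> b = 1"
  by (simp add: norm_prod_def power2_norm_eq_inner[symmetric])


lemma pos_key:
  fixes X W :: "real \<Rightarrow> real^'n^'n"
  assumes X: "is_sol A C r X" and W: "is_sol A C r W"
    and init: "\<And>a b. 0 \<le> qf2 (X 0) (W 0) a b"
    and eps: "\<epsilon> > 0"
  defines "\<beta> \<equiv> norm (moment_op A C r (mat 1)) + 1"
  defines "Xe \<equiv> (\<lambda>t. X t + (\<epsilon> * exp (\<beta> * t)) *\<^sub>R mat 1)"
  shows "\<forall>t\<ge>0. \<forall>a b. (a, b) \<noteq> 0 \<longrightarrow> 0 < qf2 (Xe t) (W t) a b"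
proof (rule ccontr)
  assume "\<not> ?thesis"
  then obtain t1 a1 b1 where t1: "t1 \<ge> 0" and ab1: "(a1, b1) \<noteq> 0" and bad1: "qf2 (Xe t1) (W t1) a1 b1 \<le> 0"
    by (auto simp: not_less)
  define h where "h p = qf2 (Xe (fst p)) (W (fst p)) (fst (snd p)) (snd (snd p))"
    for p :: "real \<times> ((real^'n) \<times> (real^'n))"
  have hq: "h (t, (a, b)) = qf2 (Xe t) (W t) a b" for t a b by (simp add: h_def)
  have Xe_eq: "qf2 (Xe t) V a b = qf2 (X t) V a b + \<epsilon> * exp (\<beta> * t) * (a \<bullet> a + b \<bullet> b)" for t V a b
    using qf2_lin[of "X t" "\<epsilon> * exp (\<beta> * t)" "mat 1" V 1 0 a b]
    by (simp add: Xe_def qf2_I qf2_def)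
  have hom: "qf2 Y V a b = (norm (a, b))^2 * qf2 Y V (a /\<^sub>R norm (a,b)) (b /\<^sub>R norm (a,b))"
    if "(a, b) \<noteq> 0" for Y V a b
  proof -
    have "norm (a, b) \<noteq> 0" using that by simp
    then show ?thesis using qf2_scale_vec[of Y V "inverse (norm (a,b))" a b]
      by (simp add: power2_eq_square field_simps)
  qed
  have unit: "norm (a /\<^sub>R norm (a,b), b /\<^sub>R norm (a,b)) = 1" if "(a, b) \<noteq> 0" for a b :: "real^'n"
  proof -
    have "(a /\<^sub>R norm (a,b), b /\<^sub>R norm (a,b)) = (a, b) /\<^sub>R norm (a, b)" by simp
    then show ?thesis using that by (simp del: scaleR_Pair)
  qed
  define S1 where "S1 = sphere (0 :: (real^'n) \<times> (real^'n)) 1"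
  define K where "K = {0..t1} \<times> S1"
  have contXe: "continuous_on {0..} Xe"
    unfolding Xe_def by (intro continuous_intros sol_continuous_on[OF X])
  have contW: "continuous_on {0..} W" by (rule sol_continuous_on[OF W])
  have cont_h: "continuous_on K h"
  proof -
    have h_eq: "h p = Xe (fst p) \<bullet> (outer (fst (snd p)) (fst (snd p)) + outer (snd (snd p)) (snd (snd p)))
        + W (fst p) \<bullet> (outer (fst (snd p)) (snd (snd p)) - outer (snd (snd p)) (fst (snd p)))" for p
      by (simp add: h_def qf2_inner)
    have c1: "continuous_on K (\<lambda>p. Xe (fst p))"
      by (rule continuous_on_compose2[OF contXe continuous_on_fst[OF continuous_on_id]]) (auto simp: K_def)
    have c2: "continuous_on K (\<lambda>p. W (fst p))"
      by (rule continuous_on_compose2[OF contW continuous_on_fst[OF continuous_on_id]]) (auto simp: K_def)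
    show ?thesis unfolding h_eq[abs_def] by (intro continuous_intros c1 c2)
  qed
  have cK: "compact K" unfolding K_def S1_def by (intro compact_Times) auto
  have clK: "closed K" using cK compact_imp_closed by blast
  define B where "B = K \<inter> h -` {..0}"
  have clB: "closed B" unfolding B_def by (rule continuous_closed_preimage[OF cont_h clK]) simp
  have cB: "compact B" using compact_Int_closed[OF cK clB] by (simp add: B_def Int_absorb1 Int_assoc)
  define z1 where "z1 = (a1 /\<^sub>R norm (a1,b1), b1 /\<^sub>R norm (a1,b1))"
  have z1S: "z1 \<in> S1" using unit[OF ab1] by (simp add: z1_def S1_def)
  have "h (t1, z1) \<le> 0"
  proof -
    have "qf2 (Xe t1) (W t1) a1 b1 = (norm (a1,b1))^2 * h (t1, z1)" by (simp add: hom[OF ab1] z1_def h_def)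
    then show ?thesis using bad1 ab1 by (simp add: zero_le_mult_iff mult_le_0_iff)
  qed
  then have "(t1, z1) \<in> B" using t1 z1S by (simp add: B_def K_def)
  then have Tne: "fst ` B \<noteq> {}" by blast
  have cT: "compact (fst ` B)" by (rule compact_continuous_image[OF continuous_on_fst[OF continuous_on_id] cB])
  obtain ts where tsT: "ts \<in> fst ` B" and tsmin: "\<And>t. t \<in> fst ` B \<Longrightarrow> ts \<le> t"
    using compact_attains_inf[OF cT Tne] by blast
  obtain zs where tsB: "(ts, zs) \<in> B" using tsT by force
  then have ts0: "0 \<le> ts" and tst1: "ts \<le> t1" and zsS: "zs \<in> S1" and hzs: "h (ts, zs) \<le> 0"
    by (auto simp: B_def K_def)
  have before: "0 < h (t, z)" if "0 \<le> t" "t < ts" "z \<in> S1" for t z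
  proof (rule ccontr)
    assume "\<not> 0 < h (t, z)"
    then have "(t, z) \<in> B" using that tst1 by (auto simp: B_def K_def)
    then have "ts \<le> t" using tsmin by force
    then show False using that by simp
  qed
  have at0: "0 < h (0, z)" if "z \<in> S1" for z
  proof -
    obtain a b where z: "z = (a, b)" by fastforce
    have "a \<bullet> a + b \<bullet> b = 1" using that z norm_pair_sq by (simp add: S1_def)
    then show ?thesis using init[of a b] eps by (simp add: z hq Xe_eq)
  qed
  have tspos: "0 < ts"
  proof (rule ccontr)
    assume "\<not> 0 < ts" then have "ts = 0" using ts0 by simp
    then show False using at0[OF zsS] hzs by simp
  qed
  have nn_ts: "0 \<le> h (ts, z)" if zS: "z \<in> S1" for z
  proof (rule ccontr)
    assume neg: "\<not> 0 \<le> h (ts, z)"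
    have "continuous_on {0..t1} (\<lambda>t. h (t, z))"
      by (rule continuous_on_compose2[OF cont_h]) (use zS in \<open>auto intro!: continuous_intros simp: K_def\<close>)
    then obtain d where d: "d > 0" "\<And>t. t \<in> {0..t1} \<Longrightarrow> dist t ts < d \<Longrightarrow> dist (h (t, z)) (h (ts, z)) < - h (ts, z)"
      unfolding continuous_on_iff using neg ts0 tst1 by (metis atLeastAtMost_iff neg_0_less_iff_less not_le)
    define t' where "t' = max 0 (ts - d/2)"
    have t'1: "t' \<in> {0..t1}" "dist t' ts < d" "t' < ts" using d(1) tspos tst1 ts0
      by (auto simp: t'_def dist_real_def)
    have "h (t', z) < 0" using d(2)[OF t'1(1,2)] by (simp add: dist_real_def abs_if split: if_splits)
    moreover have "0 < h (t', z)" using before[OF _ t'1(3) zS] by (simp add: t'_def)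
    ultimately show False by simp
  qed
  have hts0: "h (ts, zs) = 0" using nn_ts[OF zsS] hzs by simp
  obtain as bs where zs: "zs = (as, bs)" by fastforce
  have unit_s: "as \<bullet> as + bs \<bullet> bs = 1" using zsS zs norm_pair_sq by (simp add: S1_def)
  have glob: "0 \<le> qf2 (Xe ts) (W ts) a b" for a b
  proof (cases "(a, b) = 0")
    case True then show ?thesis by (simp add: qf2_00 zero_prod_def)
  next
    case False
    have "0 \<le> h (ts, (a /\<^sub>R norm (a,b), b /\<^sub>R norm (a,b)))"
      by (rule nn_ts) (use unit[OF False] in \<open>simp add: S1_def\<close>)
    then show ?thesis by (simp add: hom[OF False] hq)
  qed
  have zero_s: "qf2 (Xe ts) (W ts) as bs = 0" using hts0 by (simp add: zs hq)
  define g where "g t = h (t, zs)" for t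
  define Ga where "Ga = outer as as + outer bs bs"
  define Gw where "Gw = outer as bs - outer bs as"
  have g_eq: "g = (\<lambda>t. Xe t \<bullet> Ga + W t \<bullet> Gw)"
    by (simp add: g_def fun_eq_iff zs hq qf2_inner Ga_def Gw_def)
  define e where "e = \<epsilon> * exp (\<beta> * ts)"
  have derXe: "(Xe has_vector_derivative (moment_op A C r (X ts) + (e * \<beta>) *\<^sub>R mat 1)) (at ts within {0..})"
  proof -
    have "((\<lambda>t. \<epsilon> * exp (\<beta> * t)) has_real_derivative e * \<beta>) (at ts within {0..})"
      by (auto intro!: derivative_eq_intros simp: e_def)
    then have "((\<lambda>t. (\<epsilon> * exp (\<beta> * t)) *\<^sub>R (mat 1 :: real^'n^'n)) has_vector_derivative (e * \<beta>) *\<^sub>R mat 1) (at ts within {0..})"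
      using has_vector_derivative_scaleR[of "\<lambda>t. \<epsilon> * exp (\<beta> * t)" "e * \<beta>" ts "{0..}" "\<lambda>t. mat 1" 0]
      by (simp add: has_vector_derivative_const)
    moreover have "(X has_vector_derivative moment_op A C r (X ts)) (at ts within {0..})"
      using X ts0 unfolding is_sol_def by auto
    ultimately show ?thesis unfolding Xe_def by (intro has_vector_derivative_add)
  qed
  have derW: "(W has_vector_derivative moment_op A C r (W ts)) (at ts within {0..})"
    using W ts0 unfolding is_sol_def by auto
  define g' where "g' = (moment_op A C r (X ts) + (e * \<beta>) *\<^sub>R mat 1) \<bullet> Ga + moment_op A C r (W ts) \<bullet> Gw"
  have derg: "(g has_real_derivative g') (at ts within {0..})"
  proof -
    have "((\<lambda>t. Xe t \<bullet> Ga + W t \<bullet> Gw) has_vector_derivative g') (at ts within {0..})"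
      unfolding g'_def
      by (intro has_vector_derivative_add bounded_linear.has_vector_derivative[OF bounded_linear_inner_left]
          derXe derW)
    then show ?thesis by (simp add: g_eq has_real_derivative_iff_has_vector_derivative)
  qed
  have g'_eq: "g' = qf2 (moment_op A C r (Xe ts)) (moment_op A C r (W ts)) as bs
      + e * (\<beta> * (as \<bullet> as + bs \<bullet> bs) - qf2 (moment_op A C r (mat 1)) 0 as bs)"
  proof -
    have mXe: "moment_op A C r (Xe ts) = moment_op A C r (X ts) + e *\<^sub>R moment_op A C r (mat 1)"
      by (simp add: Xe_def e_def linear_add[OF linear_moment_op] linear_scale[OF linear_moment_op])
    have "g' = qf2 (moment_op A C r (X ts) + (e * \<beta>) *\<^sub>R mat 1) (moment_op A C r (W ts) + 0 *\<^sub>R 0) as bs"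
      by (simp add: g'_def qf2_inner Ga_def Gw_def)
    also have "\<dots> = qf2 (moment_op A C r (X ts)) (moment_op A C r (W ts)) as bs + e * \<beta> * (as \<bullet> as + bs \<bullet> bs)"
      by (simp only: qf2_lin qf2_I)
    also have "qf2 (moment_op A C r (X ts)) (moment_op A C r (W ts)) as bs
        = qf2 (moment_op A C r (Xe ts)) (moment_op A C r (W ts)) as bs - e * qf2 (moment_op A C r (mat 1)) 0 as bs"
      using qf2_lin[of "moment_op A C r (X ts)" e "moment_op A C r (mat 1)" "moment_op A C r (W ts)" 0 0 as bs]
      by (simp add: mXe)
    finally show ?thesis by (simp add: algebra_simps)
  qed
  have p1: "0 \<le> qf2 (moment_op A C r (Xe ts)) (moment_op A C r (W ts)) as bs"
    by (rule cross_pos[OF glob zero_s])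
  have p2: "qf2 (moment_op A C r (mat 1)) 0 as bs \<le> norm (moment_op A C r (mat 1)) * (as \<bullet> as + bs \<bullet> bs)"
    using qf_bound[of as "moment_op A C r (mat 1)"] qf_bound[of bs "moment_op A C r (mat 1)"]
    by (simp add: qf2_def algebra_simps)
  have "0 < e" using eps by (simp add: e_def)
  moreover have "0 < \<beta> * (as \<bullet> as + bs \<bullet> bs) - qf2 (moment_op A C r (mat 1)) 0 as bs"
    using p2 unit_s by (simp add: \<beta>_def)
  ultimately have "0 < g'" using p1 unfolding g'_eq by (metis add_nonneg_pos mult_pos_pos)
  from has_real_derivative_pos_inc_left[OF derg this]
  obtain d where d: "d > 0" "\<And>hh. hh > 0 \<Longrightarrow> ts - hh \<in> {0..} \<Longrightarrow> hh < d \<Longrightarrow> g (ts - hh) < g ts" by blast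
  define hh where "hh = min (d/2) ts"
  have "hh > 0" "ts - hh \<in> {0..}" "hh < d" using d(1) tspos by (auto simp: hh_def)
  then have "g (ts - hh) < 0" using d(2) hts0 by (simp add: g_def)
  moreover have "0 < g (ts - hh)" unfolding g_def
    by (rule before) (use \<open>hh > 0\<close> \<open>ts - hh \<in> {0..}\<close> zsS in auto)
  ultimately show False by simp
qed

lemma pos_pair:
  fixes X W :: "real \<Rightarrow> real^'n^'n"
  assumes X: "is_sol A C r X" and W: "is_sol A C r W"
    and init: "\<And>a b. 0 \<le> qf2 (X 0) (W 0) a b" and t: "t \<ge> 0"
  shows "0 \<le> qf2 (X t) (W t) a b"
proof (cases "(a, b) = 0")
  case True then show ?thesis by (simp add: qf2_00 zero_prod_def)
next
  case False
  define \<beta> where "\<beta> = norm (moment_op A C r (mat 1)) + 1"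
  define q where "q = qf2 (X t) (W t) a b"
  define c where "c = exp (\<beta> * t) * (a \<bullet> a + b \<bullet> b)"
  have "a \<bullet> a + b \<bullet> b > 0"
  proof (cases "a = 0")
    case True
    then have "b \<noteq> 0" using False by (simp add: zero_prod_def)
    then show ?thesis by (simp add: add_nonneg_pos)
  next
    case False
    then show ?thesis by (simp add: add_pos_nonneg)
  qed
  then have cpos: "c > 0" by (simp add: c_def)
  have main: "0 < q + \<epsilon> * c" if "\<epsilon> > 0" for \<epsilon>
  proof -
    have "0 < qf2 (X t + (\<epsilon> * exp (\<beta> * t)) *\<^sub>R mat 1) (W t) a b"
      using pos_key[OF X W init that] t False unfolding \<beta>_def by blast
    also have "qf2 (X t + (\<epsilon> * exp (\<beta> * t)) *\<^sub>R mat 1) (W t) a b = q + \<epsilon> * c"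
      using qf2_lin[of "X t" "\<epsilon> * exp (\<beta> * t)" "mat 1" "W t" 1 0 a b]
      by (simp add: q_def c_def qf2_I qf2_def)
    finally show ?thesis .
  qed
  show ?thesis
  proof (rule ccontr)
    assume "\<not> ?thesis"
    then have "q < 0" by (simp add: q_def)
    have "0 < q + (- q / (2 * c)) * c" by (rule main) (use \<open>q < 0\<close> cpos in \<open>simp add: field_simps\<close>)
    then show False using \<open>q < 0\<close> cpos by (simp add: field_simps)
  qed
qed


lemma ms_stable_iff:
  "ms_stable A C r \<longleftrightarrow> (\<forall>x0 S. S 0 = outer x0 x0 \<and> is_sol A C r S \<longrightarrow> ((\<lambda>t. trace (S t)) \<longlongrightarrow> 0) at_top)"
  unfolding ms_stable_def is_sol_def outer_def by blast

lemma mv_neg: "(X::real^'n^'m) *v (- v) = - (X *v v)"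
  by (simp add: matrix_vector_mult_def vec_eq_iff sum_negf)

lemma mv_uminus_left: "(- (X::real^'n^'m)) *v v = - (X *v v)"
  by (simp add: matrix_vector_mult_def vec_eq_iff sum_negf)

lemma qf2_W0: "qf2 X W a 0 = a \<bullet> (X *v a)" by (simp add: qf2_def)

lemma good_sol:
  fixes x :: "real^'n"
  assumes "ms_stable A C r"
  shows "\<exists>S. is_sol A C r S \<and> S 0 = outer x x \<and> (\<forall>t\<ge>0. transpose (S t) = S t \<and> qnn (S t))
            \<and> ((\<lambda>t. trace (S t)) \<longlongrightarrow> 0) at_top"
proof -
  obtain S0 where S0: "S0 0 = outer x x" "is_sol A C r S0" using sol_exists by blast
  define S where "S t = (1/2) *\<^sub>R (S0 t + transpose (S0 t))" for t
  have sol: "is_sol A C r S" unfolding S_def by (rule sol_sym[OF S0(2)])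
  have init: "S 0 = outer x x" by (simp add: S_def S0 transpose_outer scaleR_2[symmetric])
  have sym: "transpose (S t) = S t" for t
    by (simp add: S_def transpose_scalar transpose_add add.commute)
  have qnn: "qnn (S t)" if "t \<ge> 0" for t
    unfolding qnn_def
  proof
    fix a
    have "0 \<le> qf2 (S t) 0 a 0"
    proof (rule pos_pair[OF sol sol_zero _ that])
      fix a b :: "real^'n"
      show "0 \<le> qf2 (S 0) 0 a b" by (simp add: init qf2_def outer_qf)
    qed
    then show "0 \<le> a \<bullet> (S t *v a)" by (simp add: qf2_W0)
  qed
  have "((\<lambda>t. trace (S t)) \<longlongrightarrow> 0) at_top"
    using assms sol init unfolding ms_stable_iff by blast
  then show ?thesis using sol init sym qnn by blast
qed

lemma fejer:
  fixes S Q :: "real^'n^'n"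
  assumes "transpose S = S" "qnn S" "qnn Q"
  shows "0 \<le> S \<bullet> Q"
proof -
  obtain g :: "'n \<Rightarrow> real^'n" where g: "S = (\<Sum>k\<in>UNIV. outer (g k) (g k))" using gram[OF assms(1,2)] by blast
  show ?thesis unfolding g gram_inner using assms(3) by (auto simp: qnn_def intro: sum_nonneg)
qed

lemma psd_inner_bound:
  fixes S Y :: "real^'n^'n"
  assumes "transpose S = S" "qnn S"
  shows "\<bar>S \<bullet> Y\<bar> \<le> norm Y * trace S"
proof -
  obtain g :: "'n \<Rightarrow> real^'n" where g: "S = (\<Sum>k\<in>UNIV. outer (g k) (g k))" using gram[OF assms] by blast
  have "\<bar>S \<bullet> Y\<bar> \<le> (\<Sum>k\<in>UNIV. \<bar>g k \<bullet> (Y *v g k)\<bar>)" unfolding g gram_inner by (rule sum_abs)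
  also have "\<dots> \<le> (\<Sum>k\<in>UNIV. norm Y * (g k \<bullet> g k))" by (intro sum_mono qf_bound)
  also have "\<dots> = norm Y * trace S" unfolding g gram_trace by (simp add: sum_distrib_left)
  finally show ?thesis .
qed

lemma trace_nonneg: "qnn S \<Longrightarrow> 0 \<le> trace S"
  unfolding trace_def qnn_def
proof -
  assume q: "\<forall>x. 0 \<le> x \<bullet> (S *v x)"
  have e: "S$i$i = axis i 1 \<bullet> (S *v axis i 1)" for i
    by (simp add: inner_axis' matrix_vector_mult_basis column_def)
  show "0 \<le> (\<Sum>i\<in>UNIV. S$i$i)"
  proof (rule sum_nonneg)
    fix i show "0 \<le> S$i$i" using q e[of i] by simp
  qed
qed

lemma good_inner_tendsto:
  fixes S :: "real \<Rightarrow> real^'n^'n"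
  assumes "\<forall>t\<ge>0. transpose (S t) = S t \<and> qnn (S t)" "((\<lambda>t. trace (S t)) \<longlongrightarrow> 0) at_top"
  shows "((\<lambda>t. S t \<bullet> Y) \<longlongrightarrow> 0) at_top"
proof (rule Lim_null_comparison)
  show "\<forall>\<^sub>F t in at_top. norm (S t \<bullet> Y) \<le> norm Y * trace (S t)"
    apply (rule eventually_mono[OF eventually_ge_at_top[of "0::real"]])
    using assms(1) by (simp add: psd_inner_bound)
  show "((\<lambda>t. norm Y * trace (S t)) \<longlongrightarrow> 0) at_top"
    using tendsto_mult_right_zero[OF assms(2)] by simp
qed

lemma limit_nonneg_of_noninc:
  fixes f :: "real \<Rightarrow> real"
  assumes "(f \<longlongrightarrow> 0) at_top" "\<And>t. t \<ge> 0 \<Longrightarrow> f t \<le> f 0"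
  shows "0 \<le> f 0"
  using tendsto_upperbound[OF assms(1) _ trivial_limit_at_top_linorder]
    eventually_ge_at_top[of "0::real"] assms(2)
  by (metis (mono_tags, lifting) eventually_mono)

lemma lyap_psd:
  assumes st: "ms_stable A C r" and eq: "Lstar A C r Y = - Q"
    and Qp: "\<And>S. transpose S = S \<Longrightarrow> qnn S \<Longrightarrow> 0 \<le> S \<bullet> Q"
  shows "qnn Y"
  unfolding qnn_def
proof
  fix x
  obtain S where S: "is_sol A C r S" "S 0 = outer x x" "\<forall>t\<ge>0. transpose (S t) = S t \<and> qnn (S t)"
    "((\<lambda>t. trace (S t)) \<longlongrightarrow> 0) at_top"
    using good_sol[OF st] by blast
  define f where "f t = S t \<bullet> Y" for t
  have noninc: "f t \<le> f 0" if "t \<ge> 0" for t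
  proof (rule nonincreasing_from_deriv[of f "\<lambda>t. S t \<bullet> Lstar A C r Y"])
    fix t :: real assume "t \<ge> 0"
    show "(f has_real_derivative S t \<bullet> Lstar A C r Y) (at t within {0..})"
      unfolding f_def by (rule sol_inner_deriv[OF S(1) \<open>t \<ge> 0\<close>])
    show "S t \<bullet> Lstar A C r Y \<le> 0" using Qp[of "S t"] S(3) \<open>t \<ge> 0\<close> by (simp add: eq)
  qed (use that in auto)
  have "(f \<longlongrightarrow> 0) at_top" unfolding f_def by (rule good_inner_tendsto[OF S(3,4)])
  then have "0 \<le> f 0" using noninc by (rule limit_nonneg_of_noninc)
  then show "0 \<le> x \<bullet> (Y *v x)" by (simp add: f_def S(2) inner_commute[of "outer x x"] inner_outer)
qed

lemma linear_Lstar: "linear (Lstar A C r)"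
  unfolding Lstar_def
  by (rule linearI)
    (simp_all add: matrix_add_ldistrib mm_add_rdistrib sum.distrib mm_scaleR_left
       mm_scaleR_right scaleR_sum_right algebra_simps)

lemma axis_entry: "axis i 1 \<bullet> ((X::real^'n^'n) *v axis j 1) = X$i$j"
  by (simp add: inner_axis' matrix_vector_mult_basis column_def)

lemma lyap_antisym:
  assumes st: "ms_stable A C r" and anti: "transpose W = - W" and eq: "Lstar A C r W = 0"
  shows "W = 0"
proof -
  have Wanti: "W$j$i = - W$i$j" for i j
  proof -
    have "transpose W $ i $ j = (- W) $ i $ j" using anti by simp
    then show ?thesis by (simp add: transpose_def)
  qed
  have key: "u \<bullet> (W *v v) = 0" for u v
  proof -
    obtain Su where Su: "is_sol A C r Su" "Su 0 = outer u u" "\<forall>t\<ge>0. transpose (Su t) = Su t \<and> qnn (Su t)"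
      "((\<lambda>t. trace (Su t)) \<longlongrightarrow> 0) at_top" using good_sol[OF st] by blast
    obtain Sv where Sv: "is_sol A C r Sv" "Sv 0 = outer v v" "\<forall>t\<ge>0. transpose (Sv t) = Sv t \<and> qnn (Sv t)"
      "((\<lambda>t. trace (Sv t)) \<longlongrightarrow> 0) at_top" using good_sol[OF st] by blast
    obtain Wt where Wt: "Wt 0 = outer u v - outer v u" "is_sol A C r Wt" using sol_exists by blast
    define X where "X t = Su t + Sv t" for t
    have Xsol: "is_sol A C r X" unfolding X_def by (rule sol_add[OF Su(1) Sv(1)])
    have init: "0 \<le> qf2 (X 0) (Wt 0) a b" for a b
    proof -
      have "qf2 (X 0) (Wt 0) a b =
         (u \<bullet> a) * (u \<bullet> a) + (v \<bullet> a) * (v \<bullet> a) + ((u \<bullet> b) * (u \<bullet> b) + (v \<bullet> b) * (v \<bullet> b))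
         + ((u \<bullet> a) * (v \<bullet> b) - (v \<bullet> a) * (u \<bullet> b)) - ((u \<bullet> b) * (v \<bullet> a) - (v \<bullet> b) * (u \<bullet> a))"
        unfolding X_def Su(2) Sv(2) Wt(1)
        by (simp only: qf2_def matrix_vector_mult_add_rdistrib
            matrix_vector_mult_diff_rdistrib inner_add_right inner_diff_right outer_qf)
      also have "\<dots> = (u \<bullet> a + v \<bullet> b)^2 + (v \<bullet> a - u \<bullet> b)^2"
        by (simp add: power2_eq_square algebra_simps)
      finally show ?thesis by simp
    qed
    have pos: "0 \<le> qf2 (X t) (Wt t) a b" if "t \<ge> 0" for t a b
      by (rule pos_pair[OF Xsol Wt(2) init that])
    define f where "f t = Wt t \<bullet> W" for t
    have fconst: "f t = f 0" if "t \<ge> 0" for t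
    proof -
      have d: "(f has_real_derivative 0) (at t within {0..})" if "t \<ge> 0" for t
        unfolding f_def using sol_inner_deriv[OF Wt(2) that, of W] by (simp add: eq)
      have "f t \<le> f 0" by (rule nonincreasing_from_deriv[of f "\<lambda>_. 0"]) (use d that in auto)
      moreover have "- f t \<le> - f 0"
        by (rule nonincreasing_from_deriv[of "\<lambda>t. - f t" "\<lambda>_. 0"])
          (use d that in \<open>auto intro: DERIV_minus[of f 0, simplified]\<close>)
      ultimately show ?thesis by simp
    qed
    have bound: "\<bar>f t\<bar> \<le> (\<Sum>i\<in>UNIV. \<Sum>j\<in>UNIV. \<bar>W$i$j\<bar>) * trace (X t)" if "t \<ge> 0" for t
    proof -
      have Xd: "0 \<le> X t $ i $ i" for i
        using pos[OF that, of "axis i 1" 0] by (simp add: qf2_W0 axis_entry)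
      have Xtr: "X t $ i $ i \<le> trace (X t)" for i
        unfolding trace_def by (rule member_le_sum) (use Xd in auto)
      have Wd: "\<bar>Wt t $ i $ j - Wt t $ j $ i\<bar> \<le> X t $ i $ i + X t $ j $ j" for i j
      proof -
        have "0 \<le> qf2 (X t) (Wt t) (axis i 1) (axis j 1)" by (rule pos[OF that])
        moreover have "0 \<le> qf2 (X t) (Wt t) (axis i 1) ((-1) *\<^sub>R axis j 1)" by (rule pos[OF that])
        ultimately show ?thesis
          by (simp add: qf2_def axis_entry mv_neg)
      qed
      define SS where "SS = (\<Sum>i\<in>UNIV. \<Sum>j\<in>UNIV. Wt t $ i $ j * W$i$j)"
      have fS: "f t = SS" by (simp add: f_def inner_mat_eq SS_def)
      have s1: "SS = (\<Sum>i\<in>UNIV. \<Sum>j\<in>UNIV. - (Wt t $ j $ i * W$i$j))"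
        unfolding SS_def by (subst sum.swap) (intro sum.cong refl, metis Wanti mult_minus_right)
      have s2: "(\<Sum>i\<in>UNIV. \<Sum>j\<in>UNIV. Wt t $ j $ i * W$i$j) = - SS"
        using s1 by (simp add: sum_negf)
      have "(\<Sum>i\<in>UNIV. \<Sum>j\<in>UNIV. (Wt t $ i $ j - Wt t $ j $ i) * W$i$j)
          = SS - (\<Sum>i\<in>UNIV. \<Sum>j\<in>UNIV. Wt t $ j $ i * W$i$j)"
        by (simp add: SS_def left_diff_distrib sum_subtractf)
      then have "2 * f t = (\<Sum>i\<in>UNIV. \<Sum>j\<in>UNIV. (Wt t $ i $ j - Wt t $ j $ i) * W$i$j)"
        using s2 fS by simp
      then have "\<bar>2 * f t\<bar> = \<bar>\<Sum>i\<in>UNIV. \<Sum>j\<in>UNIV. (Wt t $ i $ j - Wt t $ j $ i) * W$i$j\<bar>" by simp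
      also have "\<dots> \<le> (\<Sum>i\<in>UNIV. \<Sum>j\<in>UNIV. \<bar>(Wt t $ i $ j - Wt t $ j $ i) * W$i$j\<bar>)"
        by (rule order_trans[OF sum_abs sum_mono[OF sum_abs]])
      also have "\<dots> \<le> (\<Sum>i\<in>UNIV. \<Sum>j\<in>UNIV. (2 * trace (X t)) * \<bar>W$i$j\<bar>)"
      proof (intro sum_mono)
        fix i j
        have "\<bar>Wt t $ i $ j - Wt t $ j $ i\<bar> \<le> 2 * trace (X t)" using Wd[of i j] Xtr[of i] Xtr[of j] by linarith
        then show "\<bar>(Wt t $ i $ j - Wt t $ j $ i) * W$i$j\<bar> \<le> (2 * trace (X t)) * \<bar>W$i$j\<bar>"
          by (simp add: abs_mult mult_right_mono)
      qed
      also have "\<dots> = 2 * ((\<Sum>i\<in>UNIV. \<Sum>j\<in>UNIV. \<bar>W$i$j\<bar>) * trace (X t))"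
        by (simp add: sum_distrib_left sum_distrib_right mult_ac)
      finally show ?thesis by (simp add: abs_mult)
    qed
    have trX: "((\<lambda>t. trace (X t)) \<longlongrightarrow> 0) at_top"
      using tendsto_add[OF Su(4) Sv(4)] by (simp add: X_def trace_add)
    have lim: "(f \<longlongrightarrow> 0) at_top"
    proof (rule Lim_null_comparison)
      show "\<forall>\<^sub>F t in at_top. norm (f t) \<le> (\<Sum>i\<in>UNIV. \<Sum>j\<in>UNIV. \<bar>W$i$j\<bar>) * trace (X t)"
        using eventually_ge_at_top[of "0::real"] by eventually_elim (simp add: bound)
      show "((\<lambda>t. (\<Sum>i\<in>UNIV. \<Sum>j\<in>UNIV. \<bar>W$i$j\<bar>) * trace (X t)) \<longlongrightarrow> 0) at_top"
        using tendsto_mult_right_zero[OF trX] by simp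
    qed
    have ev: "eventually (\<lambda>t. f t = f 0) at_top"
      by (rule eventually_mono[OF eventually_ge_at_top[of "0::real"]]) (rule fconst)
    have "((\<lambda>t::real. f 0) \<longlongrightarrow> 0) at_top" using tendsto_cong[OF ev] lim by blast
    then have f0: "f 0 = 0" by (simp add: tendsto_const_iff)
    have "v \<bullet> (W *v u) = (transpose W *v v) \<bullet> u"
      using matvec_inner_transpose[of "transpose W" v u] by simp
    also have "\<dots> = - (u \<bullet> (W *v v))" by (simp add: anti mv_uminus_left inner_commute)
    finally have "v \<bullet> (W *v u) = - (u \<bullet> (W *v v))" .
    then have "f 0 = 2 * (u \<bullet> (W *v v))"
      by (simp add: f_def Wt(1) inner_diff_left inner_commute[of "outer _ _"] inner_outer)
    then show ?thesis using f0 by simp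
  qed
  show ?thesis
    unfolding matrix_eq
  proof
    fix v
    have "(W *v v) \<bullet> (W *v v) = 0" by (rule key)
    then show "W *v v = 0 *v v" by simp
  qed
qed


lemma transpose_zero[simp]: "transpose (0::'a::semiring_1^'n^'m) = 0"
  by (simp add: transpose_def vec_eq_iff)

lemma lyap_inj:
  fixes Y :: "real^'n^'n"
  assumes st: "ms_stable A C r" and eq: "Lstar A C r Y = 0"
  shows "Y = 0"
proof -
  have lin: "linear (Lstar A C r)" by (rule linear_Lstar)
  have eqT: "Lstar A C r (transpose Y) = 0" using Lstar_transpose[of A C r Y] eq by simp
  define Ys where "Ys = (1/2) *\<^sub>R (Y + transpose Y)"
  define Ya where "Ya = (1/2) *\<^sub>R (Y - transpose Y)"
  have LYs: "Lstar A C r Ys = 0" unfolding Ys_def using eq eqT by (simp add: linear_scale[OF lin] linear_add[OF lin])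
  have LYa: "Lstar A C r Ya = 0" unfolding Ya_def using eq eqT by (simp add: linear_scale[OF lin] linear_diff[OF lin])
  have symYs: "transpose Ys = Ys" by (simp add: Ys_def transpose_scalar transpose_add add.commute)
  have antiYa: "transpose Ya = - Ya"
    by (simp add: Ya_def transpose_def vec_eq_iff field_simps)
  have Ya0: "Ya = 0" by (rule lyap_antisym[OF st antiYa LYa])
  have q1: "qnn Ys" by (rule lyap_psd[OF st]) (use LYs in auto)
  have q2: "qnn (- Ys)"
    by (rule lyap_psd[OF st]) (use LYs linear_neg[OF lin, of Ys] in auto)
  have "Ys *v x = 0" for x
  proof (rule psd_zero_imp_null[OF symYs q1])
    have "0 \<le> x \<bullet> (Ys *v x)" using q1 by (simp add: qnn_def)
    moreover have "0 \<le> x \<bullet> ((- Ys) *v x)" using q2 by (simp add: qnn_def)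
    ultimately show "x \<bullet> (Ys *v x) = 0" by (simp add: mv_uminus_left)
  qed
  then have Ys0: "Ys = 0" by (simp add: matrix_eq)
  have "Y = Ys + Ya" by (simp add: Ys_def Ya_def vec_eq_iff transpose_def field_simps)
  then show ?thesis using Ys0 Ya0 by simp
qed

lemma lyap_solve:
  fixes Q :: "real^'n^'n"
  assumes st: "ms_stable A C r"
  shows "\<exists>Y. Lstar A C r Y = Q"
proof -
  have lin: "linear (Lstar A C r)" by (rule linear_Lstar)
  have "inj (Lstar A C r)"
    unfolding inj_on_def
  proof (intro ballI impI)
    fix Y1 Y2 :: "real^'n^'n" assume "Lstar A C r Y1 = Lstar A C r Y2"
    then have "Lstar A C r (Y1 - Y2) = 0" by (simp add: linear_diff[OF lin])
    then show "Y1 = Y2" using lyap_inj[OF st] by fastforce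
  qed
  then have "surj (Lstar A C r)" using linear_injective_imp_surjective[OF lin] by blast
  then show ?thesis by (metis surjD)
qed

lemma lyap_main:
  fixes Y Q :: "real^'n^'n"
  assumes st: "ms_stable A C r" and Qs: "transpose Q = Q" and Qp: "qnn Q"
    and eq: "Lstar A C r Y + Q = 0"
  shows "psd_mat Y \<and> (\<forall>Y'. Lstar A C r Y' + Q = 0 \<longrightarrow> Y' = Y)"
proof -
  have lin: "linear (Lstar A C r)" by (rule linear_Lstar)
  have uniq: "Y' = Y" if "Lstar A C r Y' + Q = 0" for Y'
  proof -
    have "Lstar A C r Y' = Lstar A C r Y" using that eq by (metis add_left_cancel add.commute)
    then have "Lstar A C r (Y' - Y) = 0" by (simp add: linear_diff[OF lin])
    then show ?thesis using lyap_inj[OF st] by fastforce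
  qed
  have "Lstar A C r (transpose Y) + Q = 0"
  proof -
    have "transpose (Lstar A C r Y + Q) = 0" using eq by simp
    then show ?thesis by (simp add: transpose_add Lstar_transpose Qs)
  qed
  then have sym: "transpose Y = Y" by (rule uniq)
  have "qnn Y"
    by (rule lyap_psd[OF st, of Y Q]) (use eq fejer Qp in \<open>auto simp: eq_neg_iff_add_eq_0\<close>)
  then show ?thesis using sym uniq by (simp add: psd_mat_def sym_mat_def qnn_def)
qed


lemma mv_mm: "((A::real^'k^'n) ** B) *v x = A *v (B *v x)"
  by (simp add: matrix_vector_mul_assoc)

lemma inner_transpose_mv: "x \<bullet> (transpose (A::real^'k^'n) *v y) = (A *v x) \<bullet> y"
  by (simp add: matvec_inner_transpose)

lemma sym_inner: "transpose (Z::real^'n^'n) = Z \<Longrightarrow> x \<bullet> (Z *v y) = y \<bullet> (Z *v x)"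
  by (metis inner_commute matvec_inner_transpose)

lemma qL_exp:
  "s \<bullet> (Lstar A C r Y *v s) = s \<bullet> (Y *v (A *v s)) + (A *v s) \<bullet> (Y *v s)
     + (\<Sum>l=1..r. (C l *v s) \<bullet> (Y *v (C l *v s)))"
  unfolding Lstar_def
  by (simp add: matrix_vector_mult_add_rdistrib mv_sum_left inner_add_right inner_sum_right mv_mm
      inner_transpose_mv)

lemma Lexp:
  fixes Z :: "real^'n^'n" and K :: "real^'n^'m"
  assumes Zs: "transpose Z = Z"
  shows "s \<bullet> (Lstar (A + B ** K) (\<lambda>l. C l + D l ** K) r Z *v s)
    = s \<bullet> (Lstar A C r Z *v s)
      + 2 * ((K *v s) \<bullet> ((transpose B ** Z + (\<Sum>l=1..r. transpose (D l) ** Z ** C l)) *v s))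
      + (K *v s) \<bullet> ((\<Sum>l=1..r. transpose (D l) ** Z ** D l) *v (K *v s))"
proof -
  define u where "u = K *v s"
  have dr: "s \<bullet> (Z *v ((A + B ** K) *v s)) + ((A + B ** K) *v s) \<bullet> (Z *v s)
      = s \<bullet> (Z *v (A *v s)) + (A *v s) \<bullet> (Z *v s) + 2 * (u \<bullet> ((transpose B ** Z) *v s))"
  proof -
    have "(A + B ** K) *v s = A *v s + B *v u" by (simp add: u_def matrix_vector_mult_add_rdistrib mv_mm)
    moreover have "s \<bullet> (Z *v (B *v u)) = (B *v u) \<bullet> (Z *v s)" by (rule sym_inner[OF Zs])
    moreover have "(B *v u) \<bullet> (Z *v s) = u \<bullet> ((transpose B ** Z) *v s)"
      by (simp add: mv_mm inner_transpose_mv)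
    ultimately show ?thesis
      by (simp add: matrix_vector_right_distrib inner_add_right inner_add_left)
  qed
  have no: "((C l + D l ** K) *v s) \<bullet> (Z *v ((C l + D l ** K) *v s))
      = (C l *v s) \<bullet> (Z *v (C l *v s)) + 2 * (u \<bullet> ((transpose (D l) ** Z ** C l) *v s))
        + u \<bullet> ((transpose (D l) ** Z ** D l) *v u)" for l
  proof -
    have "(C l + D l ** K) *v s = C l *v s + D l *v u" by (simp add: u_def matrix_vector_mult_add_rdistrib mv_mm)
    moreover have "(C l *v s) \<bullet> (Z *v (D l *v u)) = (D l *v u) \<bullet> (Z *v (C l *v s))" by (rule sym_inner[OF Zs])
    moreover have "(D l *v u) \<bullet> (Z *v (C l *v s)) = u \<bullet> ((transpose (D l) ** Z ** C l) *v s)"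
      by (simp add: mv_mm inner_transpose_mv)
    moreover have "(D l *v u) \<bullet> (Z *v (D l *v u)) = u \<bullet> ((transpose (D l) ** Z ** D l) *v u)"
      by (simp add: mv_mm inner_transpose_mv)
    ultimately show ?thesis
      by (simp add: matrix_vector_right_distrib inner_add_right inner_add_left)
  qed
  have "s \<bullet> (Lstar (A + B ** K) (\<lambda>l. C l + D l ** K) r Z *v s)
      = s \<bullet> (Z *v (A *v s)) + (A *v s) \<bullet> (Z *v s) + 2 * (u \<bullet> ((transpose B ** Z) *v s))
        + (\<Sum>l=1..r. (C l *v s) \<bullet> (Z *v (C l *v s)) + 2 * (u \<bullet> ((transpose (D l) ** Z ** C l) *v s))
        + u \<bullet> ((transpose (D l) ** Z ** D l) *v u))"
    by (simp only: qL_exp dr no)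
  also have "\<dots> = s \<bullet> (Lstar A C r Z *v s)
      + 2 * (u \<bullet> ((transpose B ** Z + (\<Sum>l=1..r. transpose (D l) ** Z ** C l)) *v s))
      + u \<bullet> ((\<Sum>l=1..r. transpose (D l) ** Z ** D l) *v u)"
    by (simp add: qL_exp sum.distrib matrix_vector_mult_add_rdistrib mv_sum_left inner_add_right
        inner_sum_right sum_distrib_left algebra_simps)
  finally show ?thesis by (simp add: u_def)
qed

lemma csq:
  fixes Z :: "real^'n^'n" and K K' :: "real^'n^'m" and R :: "real^'m^'m"
  assumes Zs: "transpose Z = Z"
    and Rt_def: "Rt = R + (\<Sum>l=1..r. transpose (D l) ** Z ** D l)"
    and Nm_def: "Nm = transpose B ** Z + (\<Sum>l=1..r. transpose (D l) ** Z ** C l)"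
    and RtK: "Rt ** K' = - Nm" and Rts: "transpose Rt = Rt"
    and old: "s \<bullet> (Lstar (A + B ** K) (\<lambda>l. C l + D l ** K) r Z *v s) + s \<bullet> (M *v s) + (K *v s) \<bullet> (R *v (K *v s)) = 0"
  shows "s \<bullet> (Lstar (A + B ** K') (\<lambda>l. C l + D l ** K') r Z *v s) + s \<bullet> (M *v s) + (K' *v s) \<bullet> (R *v (K' *v s))
     = - ((K *v s - K' *v s) \<bullet> (Rt *v (K *v s - K' *v s)))"
proof -
  define u where "u = K *v s"
  define u' where "u' = K' *v s"
  define Rq where "Rq = (\<Sum>l=1..r. transpose (D l) ** Z ** D l)"
  define x where "x = s \<bullet> (Lstar A C r Z *v s) + s \<bullet> (M *v s)"
  have Nms: "Nm *v s = - (Rt *v u')"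
    using arg_cong[OF RtK, of "\<lambda>X. X *v s"] by (simp add: mv_mm u'_def mv_uminus_left)
  have N: "v \<bullet> (Nm *v s) = - (v \<bullet> (Rt *v u'))" for v by (simp add: Nms)
  have Q: "v \<bullet> (Rq *v v) + v \<bullet> (R *v v) = v \<bullet> (Rt *v v)" for v
    by (simp add: Rt_def Rq_def matrix_vector_mult_add_rdistrib inner_add_right)
  have o: "x - 2 * (u \<bullet> (Rt *v u')) + u \<bullet> (Rt *v u) = 0"
    using old Lexp[OF Zs, of s A B K C D r] N[of u] Q[of u]
    unfolding x_def u_def Rq_def Nm_def[symmetric] by linarith
  have n: "s \<bullet> (Lstar (A + B ** K') (\<lambda>l. C l + D l ** K') r Z *v s) + s \<bullet> (M *v s) + (K' *v s) \<bullet> (R *v (K' *v s))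
      = x - 2 * (u' \<bullet> (Rt *v u')) + u' \<bullet> (Rt *v u')"
    using Lexp[OF Zs, of s A B K' C D r] N[of u'] Q[of u']
    unfolding x_def u'_def Rq_def Nm_def[symmetric] by linarith
  have sy: "u' \<bullet> (Rt *v u) = u \<bullet> (Rt *v u')" by (rule sym_inner[OF Rts])
  have "(u - u') \<bullet> (Rt *v (u - u')) = u \<bullet> (Rt *v u) - u \<bullet> (Rt *v u') - u' \<bullet> (Rt *v u) + u' \<bullet> (Rt *v u')"
    by (simp add: matrix_vector_mult_diff_distrib inner_diff_left inner_diff_right)
  then show ?thesis using n o sy unfolding u_def u'_def by linarith
qed


lemma amgm: "(0::real) < \<eta> \<Longrightarrow> 2 * k * n * d \<le> \<eta> * n^2 + (k^2 / \<eta>) * d^2"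
proof -
  assume e: "0 < \<eta>"
  have "0 \<le> (\<eta> * n - k * d)^2 / \<eta>" using e by simp
  also have "(\<eta> * n - k * d)^2 / \<eta> = \<eta> * n^2 - 2 * k * n * d + (k^2 / \<eta>) * d^2"
    using e by (simp add: power2_eq_square field_simps)
  finally show ?thesis by simp
qed

lemma sq_sum_bound:
  fixes a b x y :: real
  assumes "0 \<le> a" "0 \<le> b" "0 \<le> x" "0 \<le> y"
  shows "(a * x + b * y)^2 \<le> (a + b)^2 * (x^2 + y^2)"
proof -
  have "(a * x + b * y)^2 = (a^2 + b^2) * (x^2 + y^2) - (a * y - b * x)^2"
    by (simp add: power2_eq_square algebra_simps)
  then have "(a * x + b * y)^2 \<le> (a^2 + b^2) * (x^2 + y^2)" by simp
  also have "\<dots> \<le> (a + b)^2 * (x^2 + y^2)"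
    using assms by (intro mult_right_mono) (auto simp: power2_eq_square algebra_simps)
  finally show ?thesis .
qed

lemma term_bound:
  fixes P :: "real^'n^'n" and Cm :: "real^'n^'n" and Dm :: "real^'m^'n" and Th :: "real^'p^'n"
    and Em :: "real^'n^'p" and u :: "real^'m" and s :: "real^'n"
  assumes e: "0 < \<eta>" and Pq: "qnn P"
  defines "\<delta> \<equiv> Dm *v u - Th *v (Em *v s)"
  shows "2 * (\<delta> \<bullet> (P *v (Cm *v s))) + \<delta> \<bullet> (P *v \<delta>)
     \<le> \<eta> * norm s ^ 2 + ((norm Dm + norm Th)^2 * ((norm P * norm Cm)^2 / \<eta> + norm P)) * (norm u ^ 2 + norm (Em *v s) ^ 2)"
proof -
  let ?k = "norm P * norm Cm"
  have t1: "2 * (\<delta> \<bullet> (P *v (Cm *v s))) \<le> 2 * ?k * norm s * norm \<delta>"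
  proof -
    have "\<delta> \<bullet> (P *v (Cm *v s)) \<le> norm \<delta> * norm (P *v (Cm *v s))" by (rule order_trans[OF abs_ge_self Cauchy_Schwarz_ineq2])
    also have "\<dots> \<le> norm \<delta> * (norm P * (norm Cm * norm s))"
      by (intro mult_left_mono order_trans[OF norm_mv_le] mult_left_mono norm_mv_le) auto
    finally show ?thesis by (simp add: mult_ac)
  qed
  also have "\<dots> \<le> \<eta> * norm s ^ 2 + (?k^2 / \<eta>) * norm \<delta> ^ 2" by (rule amgm[OF e])
  finally have t1': "2 * (\<delta> \<bullet> (P *v (Cm *v s))) \<le> \<eta> * norm s ^ 2 + (?k^2 / \<eta>) * norm \<delta> ^ 2" .
  have t2: "\<delta> \<bullet> (P *v \<delta>) \<le> norm P * norm \<delta> ^ 2"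
    using qf_bound[of \<delta> P] by (simp add: power2_norm_eq_inner)
  have nd: "norm \<delta> \<le> norm Dm * norm u + norm Th * norm (Em *v s)"
    unfolding \<delta>_def
    by (rule order_trans[OF norm_triangle_ineq4 add_mono[OF norm_mv_le norm_mv_le]])
  have nd2: "norm \<delta> ^ 2 \<le> (norm Dm + norm Th)^2 * (norm u ^ 2 + norm (Em *v s) ^ 2)"
    by (rule order_trans[OF power_mono[OF nd] sq_sum_bound]) auto
  have cpos: "0 \<le> ?k^2 / \<eta> + norm P" using e by simp
  have "2 * (\<delta> \<bullet> (P *v (Cm *v s))) + \<delta> \<bullet> (P *v \<delta>) \<le> \<eta> * norm s ^ 2 + (?k^2 / \<eta> + norm P) * norm \<delta> ^ 2"
    using t1' t2 by (simp add: algebra_simps)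
  also have "\<dots> \<le> \<eta> * norm s ^ 2 + (?k^2 / \<eta> + norm P) * ((norm Dm + norm Th)^2 * (norm u ^ 2 + norm (Em *v s) ^ 2))"
    by (intro add_left_mono mult_left_mono nd2 cpos)
  finally show ?thesis by (simp add: mult_ac)
qed


lemma pert_bound:
  fixes P :: "real^'n^'n" and A :: "real^'n^'n" and C :: "nat \<Rightarrow> real^'n^'n"
    and B :: "real^'m^'n" and D :: "nat \<Rightarrow> real^'m^'n" and Th :: "real^'p^'n"
    and E :: "nat \<Rightarrow> real^'n^'p" and K' :: "real^'n^'m"
  assumes Ps: "transpose P = P" and Pq: "qnn P"
  shows "\<exists>c\<ge>0. \<forall>s. s \<bullet> (Lstar (A + B ** K') (\<lambda>l. C l + D l ** K') r P *v s)
     \<le> s \<bullet> (Lstar (A + Th ** E 0) (\<lambda>l. C l + Th ** E l) r P *v s) + (1/2) * norm s ^ 2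
        + c * (norm (K' *v s) ^ 2 + (\<Sum>l=0..r. norm (E l *v s) ^ 2))"
proof -
  define \<eta> :: real where "\<eta> = 1 / (2 * (real r + 1))"
  have e: "0 < \<eta>" by (simp add: \<eta>_def)
  define cl where "cl l = (norm (D l) + norm Th)^2 * ((norm P * norm (C l + Th ** E l))^2 / \<eta> + norm P)" for l
  define c0 where "c0 = (norm B + norm Th)^2 * ((norm P * norm (mat 1 :: real^'n^'n))^2 / \<eta> + norm P)"
  define c where "c = c0 + (\<Sum>l=1..r. cl l)"
  have cl0: "0 \<le> cl l" for l using e by (simp add: cl_def)
  have c00: "0 \<le> c0" using e by (simp add: c0_def)
  have c0': "0 \<le> c" using cl0 c00 by (simp add: c_def sum_nonneg)
  have main: "s \<bullet> (Lstar (A + B ** K') (\<lambda>l. C l + D l ** K') r P *v s)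
     \<le> s \<bullet> (Lstar (A + Th ** E 0) (\<lambda>l. C l + Th ** E l) r P *v s) + (1/2) * norm s ^ 2
        + c * (norm (K' *v s) ^ 2 + (\<Sum>l=0..r. norm (E l *v s) ^ 2))" for s
  proof -
    define u where "u = K' *v s"
    define W where "W = norm u ^ 2 + (\<Sum>l=0..r. norm (E l *v s) ^ 2)"
    have W_ge: "norm u ^ 2 + norm (E l *v s) ^ 2 \<le> W" if "l \<le> r" for l
    proof -
      have "norm (E l *v s) ^ 2 \<le> (\<Sum>l=0..r. norm (E l *v s) ^ 2)"
        by (rule member_le_sum) (use that in auto)
      then show ?thesis by (simp add: W_def)
    qed
    define a where "a = (A + Th ** E 0) *v s"
    define cc where "cc l = (C l + Th ** E l) *v s" for l
    define d0 where "d0 = B *v u - Th *v (E 0 *v s)"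
    define d where "d l = D l *v u - Th *v (E l *v s)" for l
    have ea: "(A + B ** K') *v s = a + d0"
      by (simp add: a_def d0_def u_def matrix_vector_mult_add_rdistrib mv_mm)
    have ec: "(C l + D l ** K') *v s = cc l + d l" for l
      by (simp add: cc_def d_def u_def matrix_vector_mult_add_rdistrib mv_mm)
    have lhs: "s \<bullet> (Lstar (A + B ** K') (\<lambda>l. C l + D l ** K') r P *v s)
      = s \<bullet> (Lstar (A + Th ** E 0) (\<lambda>l. C l + Th ** E l) r P *v s)
        + 2 * (d0 \<bullet> (P *v (mat 1 *v s)))
        + (\<Sum>l=1..r. 2 * (d l \<bullet> (P *v ((C l + Th ** E l) *v s))) + d l \<bullet> (P *v d l))"
    proof -
      have s1: "s \<bullet> (P *v d0) = d0 \<bullet> (P *v s)" by (rule sym_inner[OF Ps])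
      have s2: "cc l \<bullet> (P *v d l) = d l \<bullet> (P *v cc l)" for l by (rule sym_inner[OF Ps])
      have "s \<bullet> (Lstar (A + B ** K') (\<lambda>l. C l + D l ** K') r P *v s)
        = s \<bullet> (P *v (a + d0)) + (a + d0) \<bullet> (P *v s) + (\<Sum>l=1..r. (cc l + d l) \<bullet> (P *v (cc l + d l)))"
        by (simp only: qL_exp ea ec)
      also have "\<dots> = (s \<bullet> (P *v a) + a \<bullet> (P *v s) + (\<Sum>l=1..r. cc l \<bullet> (P *v cc l)))
          + 2 * (d0 \<bullet> (P *v s)) + (\<Sum>l=1..r. 2 * (d l \<bullet> (P *v cc l)) + d l \<bullet> (P *v d l))"
        by (simp add: matrix_vector_right_distrib inner_add_left inner_add_right s1 s2 sum.distrib
            algebra_simps)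
      also have "s \<bullet> (P *v a) + a \<bullet> (P *v s) + (\<Sum>l=1..r. cc l \<bullet> (P *v cc l))
          = s \<bullet> (Lstar (A + Th ** E 0) (\<lambda>l. C l + Th ** E l) r P *v s)"
        by (simp add: qL_exp a_def cc_def)
      finally show ?thesis by (simp add: cc_def)
    qed
    have t0: "2 * (d0 \<bullet> (P *v (mat 1 *v s))) \<le> \<eta> * norm s ^ 2 + c0 * W"
    proof -
      have "0 \<le> d0 \<bullet> (P *v d0)" using Pq by (simp add: qnn_def)
      moreover have "2 * (d0 \<bullet> (P *v (mat 1 *v s))) + d0 \<bullet> (P *v d0)
          \<le> \<eta> * norm s ^ 2 + c0 * (norm u ^ 2 + norm (E 0 *v s) ^ 2)"
        unfolding d0_def c0_def by (rule term_bound[OF e Pq])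
      moreover have "c0 * (norm u ^ 2 + norm (E 0 *v s) ^ 2) \<le> c0 * W"
        by (intro mult_left_mono W_ge c00) simp
      ultimately show ?thesis by linarith
    qed
    have tl: "2 * (d l \<bullet> (P *v ((C l + Th ** E l) *v s))) + d l \<bullet> (P *v d l) \<le> \<eta> * norm s ^ 2 + cl l * W"
      if "l \<in> {1..r}" for l
    proof -
      have "2 * (d l \<bullet> (P *v ((C l + Th ** E l) *v s))) + d l \<bullet> (P *v d l)
          \<le> \<eta> * norm s ^ 2 + cl l * (norm u ^ 2 + norm (E l *v s) ^ 2)"
        unfolding d_def cl_def by (rule term_bound[OF e Pq])
      moreover have "cl l * (norm u ^ 2 + norm (E l *v s) ^ 2) \<le> cl l * W"
        by (intro mult_left_mono W_ge cl0) (use that in auto)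
      ultimately show ?thesis by linarith
    qed
    have "(\<Sum>l=1..r. 2 * (d l \<bullet> (P *v ((C l + Th ** E l) *v s))) + d l \<bullet> (P *v d l))
        \<le> (\<Sum>l=1..r. \<eta> * norm s ^ 2 + cl l * W)"
      by (rule sum_mono) (rule tl)
    also have "\<dots> = real r * \<eta> * norm s ^ 2 + (\<Sum>l=1..r. cl l) * W"
      by (simp add: sum.distrib sum_distrib_right)
    finally have ts: "(\<Sum>l=1..r. 2 * (d l \<bullet> (P *v ((C l + Th ** E l) *v s))) + d l \<bullet> (P *v d l))
        \<le> real r * \<eta> * norm s ^ 2 + (\<Sum>l=1..r. cl l) * W" .
    have h: "(real r + 1) * \<eta> = 1/2" unfolding \<eta>_def by (simp add: field_simps)
    have "\<eta> * norm s ^ 2 + real r * \<eta> * norm s ^ 2 = ((real r + 1) * \<eta>) * norm s ^ 2"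
      by (simp add: algebra_simps)
    then have "\<eta> * norm s ^ 2 + real r * \<eta> * norm s ^ 2 = (1/2) * norm s ^ 2" by (simp only: h)
    then show ?thesis using lhs t0 ts unfolding c_def W_def u_def by (simp add: algebra_simps)
  qed
  show ?thesis using main c0' by blast
qed


lemma qf_scale: "(c *\<^sub>R x) \<bullet> ((P::real^'n^'n) *v (c *\<^sub>R x)) = c^2 * (x \<bullet> (P *v x))"
  by (simp add: matrix_vector_mult_scaleR power2_eq_square)

lemma pd_lower:
  fixes P :: "real^'n^'n"
  assumes pos: "\<And>x. x \<noteq> 0 \<Longrightarrow> 0 < x \<bullet> (P *v x)"
  shows "\<exists>lam>0. \<forall>x. lam * (x \<bullet> x) \<le> x \<bullet> (P *v x)"
proof -
  define S where "S = sphere (0::real^'n) 1"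
  have ne: "S \<noteq> {}" unfolding S_def
    using norm_axis_1[of "undefined::'n"] by (metis dist_0_norm empty_iff mem_sphere)
  have cont: "continuous_on S (\<lambda>x. x \<bullet> (P *v x))" by (intro continuous_intros)
  obtain x0 where x0: "x0 \<in> S" "\<And>y. y \<in> S \<Longrightarrow> x0 \<bullet> (P *v x0) \<le> y \<bullet> (P *v y)"
    using continuous_attains_inf[OF _ ne cont] unfolding S_def by (metis compact_sphere)
  have "x0 \<noteq> 0" using x0(1) by (auto simp: S_def)
  then have lp: "0 < x0 \<bullet> (P *v x0)" by (rule pos)
  have "x0 \<bullet> (P *v x0) * (x \<bullet> x) \<le> x \<bullet> (P *v x)" for x
  proof (cases "x = 0")
    case True then show ?thesis by simp
  next
    case False
    define y where "y = x /\<^sub>R norm x"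
    have yS: "y \<in> S" using False by (simp add: S_def y_def)
    have "x = norm x *\<^sub>R y" using False by (simp add: y_def)
    then have "x \<bullet> (P *v x) = (norm x)^2 * (y \<bullet> (P *v y))" by (metis qf_scale)
    moreover have "x \<bullet> x = (norm x)^2" by (simp add: power2_norm_eq_inner)
    moreover have "x0 \<bullet> (P *v x0) * (norm x)^2 \<le> (y \<bullet> (P *v y)) * (norm x)^2"
      using x0(2)[OF yS] by (simp add: mult_right_mono)
    ultimately show ?thesis by (simp add: mult.commute)
  qed
  then show ?thesis using lp by blast
qed

lemma P_exists:
  fixes A :: "real^'n^'n"
  assumes st: "ms_stable A C r"
  shows "\<exists>P. transpose P = P \<and> qnn P \<and> Lstar A C r P = - mat 1 \<and> (\<exists>lam>0. \<forall>x. lam * (x \<bullet> x) \<le> x \<bullet> (P *v x))"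
proof -
  obtain Y where Y: "Lstar A C r Y = - mat 1" using lyap_solve[OF st] by blast
  have "psd_mat Y"
    using lyap_main[OF st, of "mat 1" Y] Y by (simp add: qnn_def)
  then have Ys: "transpose Y = Y" and Yq: "qnn Y" by (auto simp: psd_mat_def sym_mat_def qnn_def)
  have pos: "0 < x \<bullet> (Y *v x)" if "x \<noteq> 0" for x
  proof (rule ccontr)
    assume "\<not> 0 < x \<bullet> (Y *v x)"
    then have z: "x \<bullet> (Y *v x) = 0" using Yq by (simp add: qnn_def) (metis order_antisym_conv not_le)
    have Yx: "Y *v x = 0" by (rule psd_zero_imp_null[OF Ys Yq z])
    have "x \<bullet> (Lstar A C r Y *v x) = x \<bullet> (Y *v (A *v x)) + (A *v x) \<bullet> (Y *v x)
        + (\<Sum>l=1..r. (C l *v x) \<bullet> (Y *v (C l *v x)))" by (rule qL_exp)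
    also have "x \<bullet> (Y *v (A *v x)) = (A *v x) \<bullet> (Y *v x)" by (rule sym_inner[OF Ys])
    finally have "x \<bullet> (Lstar A C r Y *v x) = (\<Sum>l=1..r. (C l *v x) \<bullet> (Y *v (C l *v x)))"
      by (simp add: Yx)
    moreover have "0 \<le> (\<Sum>l=1..r. (C l *v x) \<bullet> (Y *v (C l *v x)))"
      using Yq by (auto simp: qnn_def intro: sum_nonneg)
    moreover have "x \<bullet> (Lstar A C r Y *v x) = - (x \<bullet> x)" by (simp add: Y mv_uminus_left)
    moreover have "0 < x \<bullet> x" using that by simp
    ultimately show False by linarith
  qed
  show ?thesis using pd_lower[OF pos] Ys Yq Y by blast
qed

lemma trace_scaleR: "trace (c *\<^sub>R (X::real^'n^'n)) = c * trace X"
  by (simp add: trace_def sum_distrib_left)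

lemma trace_transpose: "trace (transpose (X::real^'n^'n)) = trace X"
  by (simp add: trace_def transpose_def)

lemma sym_sol_psd:
  fixes S :: "real \<Rightarrow> real^'n^'n"
  assumes sol: "is_sol A C r S" and init: "S 0 = outer x x"
  defines "Ss \<equiv> \<lambda>t. (1/2) *\<^sub>R (S t + transpose (S t))"
  shows "is_sol A C r Ss \<and> (\<forall>t\<ge>0. transpose (Ss t) = Ss t \<and> qnn (Ss t)) \<and> (\<forall>t. trace (Ss t) = trace (S t))"
proof -
  have sol': "is_sol A C r Ss" unfolding Ss_def by (rule sol_sym[OF sol])
  have init': "Ss 0 = outer x x" by (simp add: Ss_def init transpose_outer scaleR_2[symmetric])
  have sym: "transpose (Ss t) = Ss t" for t
    by (simp add: Ss_def transpose_scalar transpose_add add.commute)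
  have qnn: "qnn (Ss t)" if "t \<ge> 0" for t
    unfolding qnn_def
  proof
    fix a
    have "0 \<le> qf2 (Ss t) 0 a 0"
    proof (rule pos_pair[OF sol' sol_zero _ that])
      fix a b :: "real^'n"
      show "0 \<le> qf2 (Ss 0) 0 a b" by (simp add: init' qf2_def outer_qf)
    qed
    then show "0 \<le> a \<bullet> (Ss t *v a)" by (simp add: qf2_W0)
  qed
  have tr: "trace (Ss t) = trace (S t)" for t
    by (simp add: Ss_def trace_scaleR trace_add trace_transpose)
  show ?thesis using sol' sym qnn tr by blast
qed


lemma exp_neg_tendsto: "(0::real) < k \<Longrightarrow> ((\<lambda>t::real. exp (- (k * t))) \<longlongrightarrow> 0) at_top"
proof -
  assume k: "0 < k"
  have "filterlim (\<lambda>t::real. k * t) at_top at_top"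
    by (rule filterlim_tendsto_pos_mult_at_top[OF tendsto_const k filterlim_ident])
  then have "filterlim (\<lambda>t::real. - (k * t)) at_bot at_top"
    by (rule filterlim_compose[OF filterlim_uminus_at_bot_at_top])
  then show ?thesis by (rule filterlim_compose[OF exp_at_bot])
qed

lemma lyap_decay_stable:
  fixes A :: "real^'n^'n" and Y :: "real^'n^'n"
  assumes Yq: "qnn Y" and Ys: "transpose Y = Y"
    and eps: "0 < \<epsilon>" and lam: "0 < lam"
    and low: "\<And>x. lam * (x \<bullet> x) \<le> x \<bullet> (Y *v x)"
    and dec: "\<And>s. s \<bullet> (Lstar A C r Y *v s) \<le> - (\<epsilon> / 2) * (s \<bullet> s)"
  shows "ms_stable A C r"
  unfolding ms_stable_iff
proof (intro allI impI, elim conjE)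
  fix x0 and S :: "real \<Rightarrow> real^'n^'n"
  assume init: "S 0 = outer x0 x0" and sol: "is_sol A C r S"
  define Ss where "Ss = (\<lambda>t. (1/2) *\<^sub>R (S t + transpose (S t)))"
  have Ssp: "is_sol A C r Ss \<and> (\<forall>t\<ge>0. transpose (Ss t) = Ss t \<and> qnn (Ss t)) \<and> (\<forall>t. trace (Ss t) = trace (S t))"
    unfolding Ss_def by (rule sym_sol_psd[OF sol init])
  then have sol': "is_sol A C r Ss" and sp: "\<And>t. t \<ge> 0 \<Longrightarrow> transpose (Ss t) = Ss t \<and> qnn (Ss t)"
    and tr: "\<And>t. trace (Ss t) = trace (S t)" by auto
  define V where "V t = Ss t \<bullet> Y" for t
  define cV where "cV = norm Y + 1"
  define \<kappa> where "\<kappa> = \<epsilon> / (2 * cV)"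
  have cV: "0 < cV" by (simp add: cV_def add_nonneg_pos)
  have kp: "0 < \<kappa>" using eps cV by (simp add: \<kappa>_def)
  have gram_t: "\<exists>g::'n \<Rightarrow> real^'n. Ss t = (\<Sum>k\<in>UNIV. outer (g k) (g k))" if "t \<ge> 0" for t
    using gram sp[OF that] by blast
  have trnn: "0 \<le> trace (Ss t)" if "t \<ge> 0" for t
    using trace_nonneg sp[OF that] by blast
  have Vup: "V t \<le> cV * trace (Ss t)" if "t \<ge> 0" for t
  proof -
    have "V t \<le> norm Y * trace (Ss t)" using psd_inner_bound[of "Ss t" Y] sp[OF that] by (simp add: V_def)
    then show ?thesis using trnn[OF that] by (simp add: cV_def algebra_simps)
  qed
  have Vlow: "lam * trace (Ss t) \<le> V t" if t0: "t \<ge> 0" for t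
  proof -
    obtain g :: "'n \<Rightarrow> real^'n" where g: "Ss t = (\<Sum>k\<in>UNIV. outer (g k) (g k))" using gram_t[OF t0] by blast
    have "lam * trace (Ss t) = (\<Sum>k\<in>UNIV. lam * (g k \<bullet> g k))" by (simp add: g gram_trace sum_distrib_left)
    also have "\<dots> \<le> (\<Sum>k\<in>UNIV. g k \<bullet> (Y *v g k))" by (intro sum_mono low)
    also have "\<dots> = V t" by (simp add: V_def g gram_inner)
    finally show ?thesis .
  qed
  have Vder: "(V has_real_derivative Ss t \<bullet> Lstar A C r Y) (at t within {0..})" if "t \<ge> 0" for t
    unfolding V_def by (rule sol_inner_deriv[OF sol' that])
  have Vder_le: "Ss t \<bullet> Lstar A C r Y \<le> - \<kappa> * V t" if t0: "t \<ge> 0" for t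
  proof -
    obtain g :: "'n \<Rightarrow> real^'n" where g: "Ss t = (\<Sum>k\<in>UNIV. outer (g k) (g k))" using gram_t[OF t0] by blast
    have "Ss t \<bullet> Lstar A C r Y = (\<Sum>k\<in>UNIV. g k \<bullet> (Lstar A C r Y *v g k))" by (simp add: g gram_inner)
    also have "\<dots> \<le> (\<Sum>k\<in>UNIV. - (\<epsilon> / 2) * (g k \<bullet> g k))" by (intro sum_mono dec)
    also have "\<dots> = - (\<epsilon> / 2) * trace (Ss t)" by (simp add: g gram_trace sum_distrib_left)
    also have "\<dots> \<le> - \<kappa> * V t"
    proof -
      have "\<kappa> * V t \<le> \<kappa> * (cV * trace (Ss t))" using Vup[OF t0] kp by (simp add: mult_left_mono)
      also have "\<kappa> * (cV * trace (Ss t)) = (\<epsilon> / 2) * trace (Ss t)" using cV by (simp add: \<kappa>_def field_simps)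
      finally show ?thesis by simp
    qed
    finally show ?thesis .
  qed
  have Vexp: "V t \<le> V 0 * exp (- \<kappa> * t)" if "t \<ge> 0" for t
    by (rule exp_decay_from_deriv[OF Vder Vder_le that])
  have bound: "norm (trace (S t)) \<le> (V 0 / (lam)) * exp (- (\<kappa> * t))" if "t \<ge> 0" for t
  proof -
    have "lam * trace (Ss t) \<le> V 0 * exp (- \<kappa> * t)" using Vlow[OF that] Vexp[OF that] by linarith
    then have "trace (Ss t) \<le> (V 0 / lam) * exp (- (\<kappa> * t))" using lam by (simp add: field_simps)
    then show ?thesis using trnn[OF that] tr[of t] by simp
  qed
  show "((\<lambda>t. trace (S t)) \<longlongrightarrow> 0) at_top"
  proof (rule Lim_null_comparison)
    show "\<forall>\<^sub>F t in at_top. norm (trace (S t)) \<le> (V 0 / lam) * exp (- (\<kappa> * t))"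
      by (rule eventually_mono[OF eventually_ge_at_top[of "0::real"]]) (rule bound)
    show "((\<lambda>t. (V 0 / lam) * exp (- (\<kappa> * t))) \<longlongrightarrow> 0) at_top"
      using tendsto_mult_right_zero[OF exp_neg_tendsto[OF kp], of "V 0 / lam"] by simp
  qed
qed


lemma improve_stable:
  fixes A :: "real^'n^'n" and C :: "nat \<Rightarrow> real^'n^'n"
    and B :: "real^'m^'n" and D :: "nat \<Rightarrow> real^'m^'n" and R :: "real^'m^'m"
    and E :: "nat \<Rightarrow> real^'n^'p" and Th :: "real^'p^'n"
    and Z M :: "real^'n^'n" and K :: "real^'n^'m"
  assumes Rpd: "pd_mat R"
    and Msum: "(\<Sum>l=0..r. transpose (E l) ** E l) = M"
    and det: "ms_stable (A + Th ** E 0) (\<lambda>l. C l + Th ** E l) r"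
    and Zs: "transpose Z = Z" and Zq: "qnn Z"
    and old: "Lstar (A + B ** K) (\<lambda>l. C l + D l ** K) r Z + (M + transpose K ** R ** K) = 0"
  shows "ms_stable (A + B ** policy_improve A C B D r R Z) (\<lambda>l. C l + D l ** policy_improve A C B D r R Z) r"
proof -
  define K' where "K' = policy_improve A C B D r R Z"
  define Rt where "Rt = R + (\<Sum>l=1..r. transpose (D l) ** Z ** D l)"
  define Nm where "Nm = transpose B ** Z + (\<Sum>l=1..r. transpose (D l) ** Z ** C l)"
  have K'_eq: "K' = - (matrix_inv Rt ** Nm)" by (simp add: K'_def policy_improve_def Rt_def Nm_def)
  have Rs: "transpose R = R" and Rp: "\<And>x. x \<noteq> 0 \<Longrightarrow> 0 < x \<bullet> (R *v x)"
    using Rpd by (auto simp: pd_mat_def sym_mat_def)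
  have Rts: "transpose Rt = Rt"
    by (simp add: Rt_def transpose_add transpose_sum transpose_mul Rs Zs matrix_mul_assoc)
  have Rtq: "x \<bullet> (Rt *v x) = x \<bullet> (R *v x) + (\<Sum>l=1..r. (D l *v x) \<bullet> (Z *v (D l *v x)))" for x
    by (simp add: Rt_def matrix_vector_mult_add_rdistrib mv_sum_left inner_add_right inner_sum_right mv_mm
        inner_transpose_mv)
  have Rtp: "0 < x \<bullet> (Rt *v x)" if "x \<noteq> 0" for x
  proof -
    have "0 \<le> (\<Sum>l=1..r. (D l *v x) \<bullet> (Z *v (D l *v x)))" using Zq by (auto simp: qnn_def intro: sum_nonneg)
    then show ?thesis using Rp[OF that] Rtq[of x] by linarith
  qed
  have Rtnn: "0 \<le> x \<bullet> (Rt *v x)" for x using Rtp[of x] by (cases "x = 0") auto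
  have "\<exists>Bi. Bi ** Rt = mat 1"
    unfolding matrix_left_invertible_ker
  proof (intro allI impI)
    fix x assume "Rt *v x = 0"
    then show "x = 0" using Rtp[of x] by auto
  qed
  then have "invertible Rt" by (simp add: invertible_left_inverse)
  then have "\<exists>Ri. Rt ** Ri = mat 1 \<and> Ri ** Rt = mat 1" by (simp add: invertible_def)
  then have RRi: "Rt ** matrix_inv Rt = mat 1" unfolding matrix_inv_def by (rule someI2_ex) auto
  have RtK: "Rt ** K' = - Nm"
    by (simp add: K'_eq mm_uminus_right matrix_mul_assoc RRi)
  obtain P where Ps: "transpose P = P" and Pq: "qnn P" and PL: "Lstar (A + Th ** E 0) (\<lambda>l. C l + Th ** E l) r P = - mat 1"
    and lamP: "\<exists>lam>0. \<forall>x. lam * (x \<bullet> x) \<le> x \<bullet> (P *v x)"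
    using P_exists[OF det] by blast
  obtain lam where lam: "lam > 0" "\<And>x. lam * (x \<bullet> x) \<le> x \<bullet> (P *v x)" using lamP by blast
  obtain rho where rho: "rho > 0" "\<And>x. rho * (x \<bullet> x) \<le> x \<bullet> (R *v x)" using pd_lower[OF Rp] by blast
  obtain c where c: "c \<ge> 0" "\<And>s. s \<bullet> (Lstar (A + B ** K') (\<lambda>l. C l + D l ** K') r P *v s)
     \<le> s \<bullet> (Lstar (A + Th ** E 0) (\<lambda>l. C l + Th ** E l) r P *v s) + (1/2) * norm s ^ 2
        + c * (norm (K' *v s) ^ 2 + (\<Sum>l=0..r. norm (E l *v s) ^ 2))"
    using pert_bound[OF Ps Pq, of A B K' C D r Th E] by blast
  define m where "m = min 1 rho"
  have m: "0 < m" "m \<le> 1" "m \<le> rho" using rho by (auto simp: m_def)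
  define \<epsilon> where "\<epsilon> = m / (c + 1)"
  have eps: "0 < \<epsilon>" using m c by (simp add: \<epsilon>_def)
  have epsc: "\<epsilon> * c \<le> m" using m c by (simp add: \<epsilon>_def field_simps)
  define Y where "Y = Z + \<epsilon> *\<^sub>R P"
  have Ys: "transpose Y = Y" by (simp add: Y_def transpose_add transpose_scalar Zs Ps)
  have Yx: "x \<bullet> (Y *v x) = x \<bullet> (Z *v x) + \<epsilon> * (x \<bullet> (P *v x))" for x
    by (simp add: Y_def matrix_vector_mult_add_rdistrib mv_scaleR_left inner_add_right)
  have Yq: "qnn Y" using Zq Pq eps by (auto simp: qnn_def Yx)
  have Ylow: "(\<epsilon> * lam) * (x \<bullet> x) \<le> x \<bullet> (Y *v x)" for x
  proof -
    have "(\<epsilon> * lam) * (x \<bullet> x) \<le> \<epsilon> * (x \<bullet> (P *v x))" using lam(2)[of x] eps by (simp add: mult.assoc)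
    then show ?thesis using Zq by (simp add: qnn_def Yx add_increasing)
  qed
  have dec: "s \<bullet> (Lstar (A + B ** K') (\<lambda>l. C l + D l ** K') r Y *v s) \<le> - (\<epsilon> / 2) * (s \<bullet> s)" for s
  proof -
    define u where "u = K *v s"
    define u' where "u' = K' *v s"
    define W where "W = norm u' ^ 2 + (\<Sum>l=0..r. norm (E l *v s) ^ 2)"
    have sM: "s \<bullet> (M *v s) = (\<Sum>l=0..r. norm (E l *v s) ^ 2)"
      by (simp add: Msum[symmetric] mv_sum_left inner_sum_right mv_mm inner_transpose_mv power2_norm_eq_inner)
    have oldv: "s \<bullet> (Lstar (A + B ** K) (\<lambda>l. C l + D l ** K) r Z *v s) + s \<bullet> (M *v s) + (K *v s) \<bullet> (R *v (K *v s)) = 0"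
    proof -
      have "s \<bullet> ((Lstar (A + B ** K) (\<lambda>l. C l + D l ** K) r Z + (M + transpose K ** R ** K)) *v s) = 0"
        by (simp add: old)
      then show ?thesis
        by (simp add: matrix_vector_mult_add_rdistrib inner_add_right mv_mm inner_transpose_mv add.assoc)
    qed
    have cs: "s \<bullet> (Lstar (A + B ** K') (\<lambda>l. C l + D l ** K') r Z *v s) + s \<bullet> (M *v s) + u' \<bullet> (R *v u')
        = - ((u - u') \<bullet> (Rt *v (u - u')))"
      unfolding u_def u'_def by (rule csq[OF Zs Rt_def Nm_def RtK Rts oldv])
    have nZ: "s \<bullet> (Lstar (A + B ** K') (\<lambda>l. C l + D l ** K') r Z *v s) \<le> - (\<Sum>l=0..r. norm (E l *v s) ^ 2) - rho * norm u' ^ 2"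
      using cs Rtnn[of "u - u'"] rho(2)[of u'] sM by (simp add: power2_norm_eq_inner)
    have nP: "s \<bullet> (Lstar (A + B ** K') (\<lambda>l. C l + D l ** K') r P *v s) \<le> - (1/2) * norm s ^ 2 + c * W"
      using c(2)[of s] by (simp add: PL mv_uminus_left W_def u'_def power2_norm_eq_inner)
    have lin: "Lstar (A + B ** K') (\<lambda>l. C l + D l ** K') r Y
        = Lstar (A + B ** K') (\<lambda>l. C l + D l ** K') r Z + \<epsilon> *\<^sub>R Lstar (A + B ** K') (\<lambda>l. C l + D l ** K') r P"
      unfolding Y_def by (simp add: linear_add[OF linear_Lstar] linear_scale[OF linear_Lstar])
    have "s \<bullet> (Lstar (A + B ** K') (\<lambda>l. C l + D l ** K') r Y *v s)
        = s \<bullet> (Lstar (A + B ** K') (\<lambda>l. C l + D l ** K') r Z *v s) + \<epsilon> * (s \<bullet> (Lstar (A + B ** K') (\<lambda>l. C l + D l ** K') r P *v s))"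
      by (simp add: lin matrix_vector_mult_add_rdistrib mv_scaleR_left inner_add_right)
    also have "\<dots> \<le> (- (\<Sum>l=0..r. norm (E l *v s) ^ 2) - rho * norm u' ^ 2) + \<epsilon> * (- (1/2) * norm s ^ 2 + c * W)"
      using nZ nP eps by (intro add_mono mult_left_mono) auto
    also have "\<dots> \<le> - (\<epsilon> / 2) * (s \<bullet> s)"
    proof -
      have S0: "0 \<le> (\<Sum>l=0..r. norm (E l *v s) ^ 2)" by (simp add: sum_nonneg)
      have W0: "0 \<le> W" unfolding W_def using S0 by simp
      have a1: "m * (\<Sum>l=0..r. norm (E l *v s) ^ 2) \<le> (\<Sum>l=0..r. norm (E l *v s) ^ 2)"
        using m S0 by (simp add: mult_left_le_one_le)
      have a2: "m * norm u' ^ 2 \<le> rho * norm u' ^ 2" using m by (simp add: mult_right_mono)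
      have a3: "(\<epsilon> * c) * W \<le> m * W" using epsc W0 by (simp add: mult_right_mono)
      have "s \<bullet> s = norm s ^ 2" by (simp add: power2_norm_eq_inner)
      then show ?thesis using a1 a2 a3 unfolding W_def by (simp add: algebra_simps)
    qed
    finally show ?thesis .
  qed
  have "ms_stable (A + B ** K') (\<lambda>l. C l + D l ** K') r"
    by (rule lyap_decay_stable[OF Yq Ys _ _ Ylow dec]) (use eps lam in auto)
  then show ?thesis by (simp add: K'_def)
qed


lemma eval_Lstar:
  "policy_eval_eq A C B D r M R K Z \<longleftrightarrow>
     Lstar (A + B ** K) (\<lambda>l. C l + D l ** K) r Z + (M + transpose K ** R ** K) = 0"
  unfolding policy_eval_eq_def Lstar_def by (simp add: add.assoc)

theorem lemma1:
  fixes A :: "real^'n^'n" and C :: "nat \<Rightarrow> real^'n^'n"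
    and B2 :: "real^'m^'n" and D2 :: "nat \<Rightarrow> real^'m^'n"
    and M :: "real^'n^'n" and R22 :: "real^'m^'m" and r :: nat
    and E :: "nat \<Rightarrow> real^'n^'p"
    and K2 :: "nat \<Rightarrow> real^'n^'m" and Z :: "nat \<Rightarrow> real^'n^'n"
  assumes R22_pd: "pd_mat R22"
    and M_sym: "sym_mat M"
    and K0: "K2 0 \<in> stabilizers A C B2 D2 r"
    and E_sum: "(\<Sum>l=0..r. transpose (E l) ** E l) = M"
    and detect: "stoch_detectable E A C r"
    and eval: "\<And>j. policy_eval_eq A C B2 D2 r M R22 (K2 j) (Z (Suc j))"
    and improve: "\<And>j. K2 (Suc j) = policy_improve A C B2 D2 r R22 (Z (Suc j))"
  shows "\<forall>j. K2 j \<in> stabilizers A C B2 D2 r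
            \<and> psd_mat (Z (Suc j))
            \<and> (\<forall>Z'. psd_mat Z' \<and> policy_eval_eq A C B2 D2 r M R22 (K2 j) Z' \<longrightarrow> Z' = Z (Suc j))"
proof -
  have Rs: "transpose R22 = R22" and Rp: "\<And>x. 0 \<le> x \<bullet> (R22 *v x)"
    using R22_pd by (auto simp: pd_mat_def sym_mat_def) (metis less_eq_real_def inner_zero_left matrix_vector_mult_0_right order_refl)
  have Ms: "transpose M = M" using M_sym by (simp add: sym_mat_def)
  have Mq: "0 \<le> x \<bullet> (M *v x)" for x
    by (simp add: E_sum[symmetric] mv_sum_left inner_sum_right mv_mm inner_transpose_mv sum_nonneg)
  define Q where "Q j = M + transpose (K2 j) ** R22 ** K2 j" for j
  have Qs: "transpose (Q j) = Q j" for j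
    by (simp add: Q_def transpose_add transpose_mul Ms Rs matrix_mul_assoc)
  have Qq: "qnn (Q j)" for j
    unfolding qnn_def
  proof
    fix x
    have "x \<bullet> (Q j *v x) = x \<bullet> (M *v x) + (K2 j *v x) \<bullet> (R22 *v (K2 j *v x))"
      by (simp add: Q_def matrix_vector_mult_add_rdistrib inner_add_right mv_mm inner_transpose_mv)
    then show "0 \<le> x \<bullet> (Q j *v x)" using Mq[of x] Rp[of "K2 j *v x"] by simp
  qed
  have evL: "Lstar (A + B2 ** K2 j) (\<lambda>l. C l + D2 l ** K2 j) r (Z (Suc j)) + Q j = 0" for j
    using eval[of j] by (simp add: eval_Lstar Q_def)
  obtain Th :: "real^'p^'n" where det: "ms_stable (A + Th ** E 0) (\<lambda>l. C l + Th ** E l) r"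
    using detect by (auto simp: stoch_detectable_def)
  have LM: "psd_mat (Z (Suc j)) \<and> (\<forall>Y'. Lstar (A + B2 ** K2 j) (\<lambda>l. C l + D2 l ** K2 j) r Y' + Q j = 0 \<longrightarrow> Y' = Z (Suc j))"
    if "K2 j \<in> stabilizers A C B2 D2 r" for j
    using lyap_main[OF _ Qs Qq evL] that by (simp add: stabilizers_def)
  have stab: "K2 j \<in> stabilizers A C B2 D2 r" for j
  proof (induction j)
    case 0 then show ?case by (rule K0)
  next
    case (Suc j)
    have "psd_mat (Z (Suc j))" using LM[OF Suc] by blast
    then have Zs: "transpose (Z (Suc j)) = Z (Suc j)" and Zq: "qnn (Z (Suc j))"
      by (auto simp: psd_mat_def sym_mat_def qnn_def)
    have "ms_stable (A + B2 ** policy_improve A C B2 D2 r R22 (Z (Suc j)))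
        (\<lambda>l. C l + D2 l ** policy_improve A C B2 D2 r R22 (Z (Suc j))) r"
      using improve_stable[OF R22_pd E_sum det Zs Zq] evL[of j] by (simp add: Q_def)
    then show ?case by (simp add: stabilizers_def improve[of j])
  qed
  show ?thesis
  proof (rule allI)
    fix j
    have h3: "\<forall>Z'. psd_mat Z' \<and> policy_eval_eq A C B2 D2 r M R22 (K2 j) Z' \<longrightarrow> Z' = Z (Suc j)"
      using LM[OF stab] by (simp add: eval_Lstar Q_def)
    show "K2 j \<in> stabilizers A C B2 D2 r \<and> psd_mat (Z (Suc j)) \<and>
      (\<forall>Z'. psd_mat Z' \<and> policy_eval_eq A C B2 D2 r M R22 (K2 j) Z' \<longrightarrow> Z' = Z (Suc j))"
      using stab[of j] LM[OF stab[of j]] h3 by blast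
  qed
qed


end
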